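(* (a) For every real $\alpha<0$: $\mu_{1,m}(\alpha)$ is strictly increasing in $m\ge2$; $\mu_{5,m}(\alpha)$ is strictly increasing in $m\ge3$; and for every $m\ge2$, \[ \mu_{1,m}(\alpha)<\mu_2(\alpha)<\mu_3(\alpha)<\mu_4(\alpha)<\mu_{5,3}(\alpha). \] (b) For every real $\alpha\in(0,\tfrac12)$, all the inequalities and monotonicities in (a) hold with the order reversed (i.e. $\mu_{1,m}(\alpha)$ and $\mu_{5,m}(\alpha)$ are strictly decreasing in $m$ and $\mu_{1,m}(\alpha)>\mu_2(\alpha)>\mu_3(\alpha)>\mu_4(\alpha)>\mu_{5,3}(\alpha)$), and the same reversed statements hold with $\mu(\alpha)$ replaced by $\mu'$.
   Context: Consider Galton–Watson trees with offspring distributions: $\xi_{1,m}\sim\mathrm{Bin}(m,1/m)$ ($m\ge2$); $\xi_2\sim\mathrm{Po}(1)$; $\xi_3\sim 2\,\mathrm{Bin}(1,1/2)$; $\xi_4\sim\mathrm{Ge}(1/2)$, i.e. $\mathbb P(\xi_4=k)=2^{-k-1}$, $k\ge0$; $\xi_{5,m}\sim m\,\mathrm{Bin}(1,1/m)$ ($m\ge3$). For a Galton–Watson tree $\mathcal T$ with the indicated offspring distribution (indexed by the same subscript), $\mu(\alpha):=\mathbb E|\mathcal T|^\alpha$ for real $\alpha<1/2$ and $\mu':=\mathbb E\log|\mathcal T|$, where $|\mathcal T|$ is the number of vertices. *)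

theory Defs
  imports "HOL-Probability.Probability"
begin

datatype ptree = Node "ptree list"

fun tsize :: "ptree \<Rightarrow> nat" where
  "tsize (Node ts) = 1 + sum_list (map tsize ts)"

fun gw_tree_prob :: "nat pmf \<Rightarrow> ptree \<Rightarrow> real" where
  "gw_tree_prob \<xi> (Node ts) = pmf \<xi> (length ts) * prod_list (map (gw_tree_prob \<xi>) ts)"

definition gw_size_prob :: "nat pmf \<Rightarrow> nat \<Rightarrow> real" where
  "gw_size_prob \<xi> n = (\<Sum>t\<in>{t. tsize t = n}. gw_tree_prob \<xi> t)"

definition gw_mu :: "nat pmf \<Rightarrow> real \<Rightarrow> real" where
  "gw_mu \<xi> \<alpha> = (\<Sum>n. gw_size_prob \<xi> n * real n powr \<alpha>)"

definition gw_mu_log :: "nat pmf \<Rightarrow> real" where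
  "gw_mu_log \<xi> = (\<Sum>n. gw_size_prob \<xi> n * ln (real n))"

definition xi1 :: "nat \<Rightarrow> nat pmf" where
  "xi1 m = binomial_pmf m (1 / real m)"

definition xi2 :: "nat pmf" where
  "xi2 = poisson_pmf 1"

definition xi3 :: "nat pmf" where
  "xi3 = map_pmf (\<lambda>b. if b then 2 else 0) (bernoulli_pmf (1/2))"

definition xi4 :: "nat pmf" where
  "xi4 = geometric_pmf (1/2)"

definition xi5 :: "nat \<Rightarrow> nat pmf" where
  "xi5 m = map_pmf (\<lambda>b. if b then m else 0) (bernoulli_pmf (1 / real m))"

end

theory Submission
  imports Defs "HOL-Analysis.Analysis"
begin


lemma tsize_pos: "tsize t \<ge> 1"
  by (cases t) simp

lemma length_le_sum_tsize: "length ts \<le> sum_list (map tsize ts)"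
proof (induction ts)
  case (Cons a ts)
  have "1 \<le> tsize a" by (rule tsize_pos)
  with Cons show ?case by simp
qed simp

lemma member_le_sum_tsize: "t \<in> set ts \<Longrightarrow> tsize t \<le> sum_list (map tsize ts)"
  by (induction ts) auto

lemma tsize_nz: "tsize t \<noteq> 0"
  using tsize_pos[of t] by linarith

definition TS :: "nat \<Rightarrow> ptree set" where "TS N = {t. tsize t \<le> N}"

lemma finite_TS: "finite (TS N)"
proof (induction N)
  case 0
  have "TS 0 = {}" using tsize_nz by (auto simp: TS_def)
  then show ?case by simp
next
  case (Suc N)
  have "TS (Suc N) \<subseteq> Node ` {ts. set ts \<subseteq> TS N \<and> length ts \<le> N}"
  proof
    fix t assume "t \<in> TS (Suc N)"
    then obtain ts where t: "t = Node ts" and le: "sum_list (map tsize ts) \<le> N"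
      by (cases t) (auto simp: TS_def)
    have "set ts \<subseteq> TS N" using le member_le_sum_tsize by (fastforce simp: TS_def)
    moreover have "length ts \<le> N" using le length_le_sum_tsize le_trans by blast
    ultimately show "t \<in> Node ` {ts. set ts \<subseteq> TS N \<and> length ts \<le> N}" using t by auto
  qed
  moreover have "finite {ts. set ts \<subseteq> TS N \<and> length ts \<le> N}"
    using Suc finite_lists_length_le by blast
  ultimately show ?case using finite_subset by blast
qed

lemma finite_size_eq: "finite {t. tsize t = n}"
  by (rule finite_subset[OF _ finite_TS[of n]]) (auto simp: TS_def)

lemma gw_tree_prob_nonneg: "gw_tree_prob \<xi> t \<ge> 0"
proof (induction t)
  case (Node ts)
  then show ?case by (simp, intro mult_nonneg_nonneg pmf_nonneg prod_list_nonneg) auto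
qed

lemma gw_size_prob_nonneg: "gw_size_prob \<xi> n \<ge> 0"
  unfolding gw_size_prob_def by (intro sum_nonneg gw_tree_prob_nonneg)

lemma gw_size_prob_0: "gw_size_prob \<xi> 0 = 0"
proof -
  have e: "{t. tsize t = 0} = {}" using tsize_nz by auto
  show ?thesis unfolding gw_size_prob_def e by simp
qed

lemma gw_size_prob_1: "gw_size_prob \<xi> 1 = pmf \<xi> 0"
proof -
  have "{t. tsize t = 1} = {Node []}"
  proof safe
    fix t assume "tsize t = 1"
    then obtain ts where "t = Node ts" "sum_list (map tsize ts) = 0" by (cases t) auto
    then show "t = Node []" using tsize_nz by (cases ts) auto
  qed simp
  then show ?thesis by (simp add: gw_size_prob_def)
qed

lemma prod_list_map_mult_pow:
  "prod_list (map (\<lambda>t. f t * (z::real) ^ g t) ts) = prod_list (map f ts) * z ^ sum_list (map g ts)"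
  by (induction ts) (auto simp: power_add algebra_simps)

lemma tree_term_Node:
  "gw_tree_prob \<xi> (Node ts) * (z::real) ^ tsize (Node ts) =
   z * pmf \<xi> (length ts) * prod_list (map (\<lambda>t. gw_tree_prob \<xi> t * z ^ tsize t) ts)"
  by (simp add: prod_list_map_mult_pow)

lemma sum_lists_prod:
  fixes f :: "'a \<Rightarrow> real"
  assumes "finite S"
  shows "(\<Sum>ts\<in>{ts. set ts \<subseteq> S \<and> length ts = k}. prod_list (map f ts)) = (sum f S) ^ k"
proof (induction k)
  case 0
  have "{ts. set ts \<subseteq> S \<and> length ts = 0} = {[]}" by auto
  then show ?case by simp
next
  case (Suc k)
  have inj: "inj_on (\<lambda>(xs, n). n # xs) ({xs. set xs \<subseteq> S \<and> length xs = k} \<times> S)"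
    by (auto simp: inj_on_def)
  have fin: "finite {xs. set xs \<subseteq> S \<and> length xs = k}"
    using finite_lists_length_eq[OF assms] by blast
  let ?A = "{xs. set xs \<subseteq> S \<and> length xs = k}"
  have "(\<Sum>ts\<in>(\<lambda>(xs,n). n#xs) ` (?A \<times> S). prod_list (map f ts)) = (\<Sum>(xs,n)\<in>?A\<times>S. f n * prod_list (map f xs))"
    by (subst sum.reindex[OF inj]) (simp add: case_prod_unfold)
  also have "\<dots> = (\<Sum>xs\<in>?A. \<Sum>n\<in>S. f n * prod_list (map f xs))"
    by (rule sum.cartesian_product[symmetric])
  also have "\<dots> = (\<Sum>xs\<in>?A. prod_list (map f xs)) * sum f S"
    by (simp add: sum_product mult.commute sum.swap[of _ S])
  finally show ?case
    unfolding lists_length_Suc_eq using Suc by (simp add: power_Suc mult.commute)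
qed

lemma sum_Node_lists:
  assumes "finite S"
  shows "(\<Sum>ts\<in>{ts. set ts \<subseteq> S \<and> length ts \<le> K}. gw_tree_prob \<xi> (Node ts) * (z::real) ^ tsize (Node ts))
       = z * (\<Sum>k\<le>K. pmf \<xi> k * (\<Sum>t\<in>S. gw_tree_prob \<xi> t * z ^ tsize t) ^ k)"
proof -
  let ?L = "{ts. set ts \<subseteq> S \<and> length ts \<le> K}"
  let ?F = "\<lambda>t. gw_tree_prob \<xi> t * z ^ tsize t"
  have fin: "finite ?L" using finite_lists_length_le[OF assms] by blast
  have "(\<Sum>ts\<in>?L. ?F (Node ts)) = (\<Sum>k\<le>K. \<Sum>ts\<in>{ts\<in>?L. length ts = k}. ?F (Node ts))"
    by (rule sum.group[symmetric, OF fin]) auto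
  also have "\<dots> = (\<Sum>k\<le>K. z * pmf \<xi> k * (\<Sum>ts\<in>{ts. set ts \<subseteq> S \<and> length ts = k}. prod_list (map ?F ts)))"
  proof (rule sum.cong[OF refl])
    fix k assume k: "k \<in> {..K}"
    have "{ts\<in>?L. length ts = k} = {ts. set ts \<subseteq> S \<and> length ts = k}" using k by auto
    then show "(\<Sum>ts\<in>{ts\<in>?L. length ts = k}. ?F (Node ts)) =
      z * pmf \<xi> k * (\<Sum>ts\<in>{ts. set ts \<subseteq> S \<and> length ts = k}. prod_list (map ?F ts))"
      by (simp only: tree_term_Node sum_distrib_left) (rule sum.cong, auto)
  qed
  also have "\<dots> = z * (\<Sum>k\<le>K. pmf \<xi> k * (sum ?F S) ^ k)"
    by (simp add: sum_lists_prod[OF assms] sum_distrib_left algebra_simps)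
  finally show ?thesis .
qed



definition pgf :: "nat pmf \<Rightarrow> real \<Rightarrow> real" where "pgf \<xi> y = (\<Sum>k. pmf \<xi> k * y ^ k)"
definition PS :: "(nat \<Rightarrow> real) \<Rightarrow> real \<Rightarrow> real" where "PS p z = (\<Sum>n. p n * z ^ n)"

lemma pmf_sums1: "(\<lambda>k. pmf (\<xi>::nat pmf) k) sums 1"
proof -
  have "(\<Sum>k. ennreal (pmf \<xi> k)) = (\<integral>\<^sup>+k. pmf \<xi> k \<partial>count_space UNIV)"
    by (simp add: nn_integral_count_space_nat)
  also have "\<dots> = 1" by (simp add: nn_integral_pmf)
  finally have e: "(\<Sum>k. ennreal (pmf \<xi> k)) = 1" .
  have s: "summable (pmf \<xi>)" by (rule summable_suminf_not_top) (auto simp: e)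
  have "ennreal (\<Sum>k. pmf \<xi> k) = 1" using suminf_ennreal2[OF _ s] e by simp
  then have "(\<Sum>k. pmf \<xi> k) = 1" by simp
  with s show ?thesis by (simp add: summable_sums_iff)
qed

lemma pgf_summable: "\<bar>y\<bar> \<le> 1 \<Longrightarrow> summable (\<lambda>k. pmf \<xi> k * (y::real) ^ k)"
  by (rule summable_comparison_test[OF _ sums_summable[OF pmf_sums1[of \<xi>]]])
     (auto intro!: exI[of _ 0] simp: abs_mult power_abs intro!: mult_left_le power_le_one)

lemma pgf_1: "pgf \<xi> 1 = 1"
  using pmf_sums1[of \<xi>] by (simp add: pgf_def sums_iff)

lemma pgf_nonneg: "0 \<le> y \<Longrightarrow> y \<le> 1 \<Longrightarrow> 0 \<le> pgf \<xi> y"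
  unfolding pgf_def by (rule suminf_nonneg) (auto intro: pgf_summable)

lemma pgf_mono: "0 \<le> x \<Longrightarrow> x \<le> y \<Longrightarrow> y \<le> 1 \<Longrightarrow> pgf \<xi> x \<le> pgf \<xi> y"
  unfolding pgf_def
  by (rule suminf_le) (auto intro!: pgf_summable mult_left_mono power_mono)

lemma pgf_le_1: "0 \<le> y \<Longrightarrow> y \<le> 1 \<Longrightarrow> pgf \<xi> y \<le> 1"
  using pgf_mono[of y 1 \<xi>] pgf_1 by simp

lemma pgf_partial_le: "0 \<le> y \<Longrightarrow> y \<le> 1 \<Longrightarrow> (\<Sum>k\<le>K. pmf \<xi> k * y ^ k) \<le> pgf \<xi> y"
  unfolding pgf_def by (rule sum_le_suminf) (auto intro: pgf_summable)

lemma pgf_convex: "convex_on {0..1} (pgf \<xi>)"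
proof (rule convex_onI)
  fix t x y :: real assume t: "0 < t" "t < 1" and x: "x \<in> {0..1}" and y: "y \<in> {0..1}"
  have cvx: "((1 - t) * x + t * y) ^ k \<le> (1 - t) * x ^ k + t * y ^ k" for k
  proof -
    have "convex_on {0..} (\<lambda>x::real. x ^ k)"
      by (cases "even k") (auto intro: convex_power_odd convex_on_subset[OF convex_power_even])
    from convex_onD[OF this, of t x y] show ?thesis using x y t by simp
  qed
  have s1: "summable (\<lambda>k. pmf \<xi> k * ((1 - t) * x + t * y) ^ k)"
    using x y t by (intro pgf_summable) (auto simp: convex_bound_le)
  have sx: "summable (\<lambda>k. pmf \<xi> k * x ^ k)" and sy: "summable (\<lambda>k. pmf \<xi> k * y ^ k)"
    using x y by (auto intro!: pgf_summable)
  have "pgf \<xi> ((1 - t) * x + t * y) \<le> (\<Sum>k. (1 - t) * (pmf \<xi> k * x ^ k) + t * (pmf \<xi> k * y ^ k))"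
    unfolding pgf_def
  proof (rule suminf_le)
    fix k
    have "pmf \<xi> k * ((1 - t) * x + t * y) ^ k \<le> pmf \<xi> k * ((1 - t) * x ^ k + t * y ^ k)"
      by (rule mult_left_mono[OF cvx pmf_nonneg])
    then show "pmf \<xi> k * ((1 - t) * x + t * y) ^ k \<le> (1 - t) * (pmf \<xi> k * x ^ k) + t * (pmf \<xi> k * y ^ k)"
      by (simp add: algebra_simps)
  qed (auto intro!: s1 summable_add summable_mult sx sy)
  also have "\<dots> = (1 - t) * pgf \<xi> x + t * pgf \<xi> y"
    unfolding pgf_def
    by (subst suminf_add[symmetric]) (auto intro!: summable_mult sx sy simp: suminf_mult[OF sx] suminf_mult[OF sy])
  finally show "pgf \<xi> ((1 - t) *\<^sub>R x + t *\<^sub>R y) \<le> (1 - t) * pgf \<xi> x + t * pgf \<xi> y" by simp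
qed (simp add: convex_real_interval)

definition YN :: "nat pmf \<Rightarrow> nat \<Rightarrow> real \<Rightarrow> real" where
  "YN \<xi> N z = (\<Sum>t\<in>TS N. gw_tree_prob \<xi> t * z ^ tsize t)"

lemma YN_eq: "YN \<xi> N z = (\<Sum>n\<le>N. gw_size_prob \<xi> n * z ^ n)"
proof -
  have "YN \<xi> N z = (\<Sum>n\<le>N. \<Sum>t\<in>{t\<in>TS N. tsize t = n}. gw_tree_prob \<xi> t * z ^ tsize t)"
    unfolding YN_def by (rule sum.group[symmetric]) (simp_all add: finite_TS, auto simp: TS_def)
  also have "\<dots> = (\<Sum>n\<le>N. gw_size_prob \<xi> n * z ^ n)"
  proof (rule sum.cong[OF refl])
    fix n assume "n \<in> {..N}"
    then have "{t\<in>TS N. tsize t = n} = {t. tsize t = n}" by (auto simp: TS_def)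
    then show "(\<Sum>t\<in>{t\<in>TS N. tsize t = n}. gw_tree_prob \<xi> t * z ^ tsize t) = gw_size_prob \<xi> n * z ^ n"
      by (simp add: gw_size_prob_def sum_distrib_right)
  qed
  finally show ?thesis .
qed

lemma YN_nonneg: "0 \<le> z \<Longrightarrow> 0 \<le> YN \<xi> N z"
  unfolding YN_def by (intro sum_nonneg mult_nonneg_nonneg gw_tree_prob_nonneg) auto

lemma YN_0: "YN \<xi> 0 z = 0"
  by (simp add: YN_eq gw_size_prob_0)

lemma YN_upper:
  assumes z: "0 \<le> z"
  shows "YN \<xi> (Suc N) z \<le> z * (\<Sum>k\<le>N. pmf \<xi> k * (YN \<xi> N z) ^ k)"
proof -
  let ?L = "{ts. set ts \<subseteq> TS N \<and> length ts \<le> N}"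
  let ?F = "\<lambda>t. gw_tree_prob \<xi> t * z ^ tsize t"
  have sub: "TS (Suc N) \<subseteq> Node ` ?L"
  proof
    fix t assume "t \<in> TS (Suc N)"
    then obtain ts where t: "t = Node ts" and le: "sum_list (map tsize ts) \<le> N"
      by (cases t) (auto simp: TS_def)
    have "set ts \<subseteq> TS N" using le member_le_sum_tsize by (fastforce simp: TS_def)
    moreover have "length ts \<le> N" using le length_le_sum_tsize le_trans by blast
    ultimately show "t \<in> Node ` ?L" using t by auto
  qed
  have finL: "finite ?L" using finite_lists_length_le[OF finite_TS] by blast
  have "YN \<xi> (Suc N) z \<le> (\<Sum>t\<in>Node ` ?L. ?F t)"
    unfolding YN_def
    by (rule sum_mono2[OF finite_imageI[OF finL] sub]) (auto intro!: mult_nonneg_nonneg gw_tree_prob_nonneg z zero_le_power)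
  also have "\<dots> = (\<Sum>ts\<in>?L. ?F (Node ts))"
    by (subst sum.reindex) (auto simp: inj_on_def)
  also have "\<dots> = z * (\<Sum>k\<le>N. pmf \<xi> k * (YN \<xi> N z) ^ k)"
    unfolding YN_def by (rule sum_Node_lists[OF finite_TS])
  finally show ?thesis .
qed

lemma sum_list_le_bound: "(\<And>t. t \<in> set ts \<Longrightarrow> f t \<le> (M::nat)) \<Longrightarrow> sum_list (map f ts) \<le> length ts * M"
  by (induction ts) (auto simp: add_mono)

lemma YN_lower:
  assumes z: "0 \<le> z"
  shows "z * (\<Sum>k\<le>K. pmf \<xi> k * (YN \<xi> M z) ^ k) \<le> YN \<xi> (Suc (K * M)) z"
proof -
  let ?L = "{ts. set ts \<subseteq> TS M \<and> length ts \<le> K}"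
  let ?F = "\<lambda>t. gw_tree_prob \<xi> t * z ^ tsize t"
  have sub: "Node ` ?L \<subseteq> TS (Suc (K * M))"
  proof
    fix t assume "t \<in> Node ` ?L"
    then obtain ts where t: "t = Node ts" and S: "set ts \<subseteq> TS M" and l: "length ts \<le> K" by auto
    have "sum_list (map tsize ts) \<le> length ts * M"
      using S by (intro sum_list_le_bound) (auto simp: TS_def)
    also have "\<dots> \<le> K * M" using l by (simp add: mult_right_mono)
    finally have "sum_list (map tsize ts) \<le> K * M" .
    then show "t \<in> TS (Suc (K * M))" using t by (simp add: TS_def)
  qed
  have finL: "finite ?L" using finite_lists_length_le[OF finite_TS] by blast
  have "z * (\<Sum>k\<le>K. pmf \<xi> k * (YN \<xi> M z) ^ k) = (\<Sum>ts\<in>?L. ?F (Node ts))"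
    unfolding YN_def by (rule sum_Node_lists[OF finite_TS, symmetric])
  also have "\<dots> = (\<Sum>t\<in>Node ` ?L. ?F t)"
    by (subst sum.reindex) (auto simp: inj_on_def)
  also have "\<dots> \<le> YN \<xi> (Suc (K * M)) z"
    unfolding YN_def
    by (rule sum_mono2[OF finite_TS sub]) (auto intro!: mult_nonneg_nonneg gw_tree_prob_nonneg z zero_le_power)
  finally show ?thesis .
qed

lemma YN_le_1: "YN \<xi> N 1 \<le> 1"
proof (induction N)
  case 0
  then show ?case by (simp add: YN_0)
next
  case (Suc N)
  have "YN \<xi> (Suc N) 1 \<le> (\<Sum>k\<le>N. pmf \<xi> k * (YN \<xi> N 1) ^ k)"
    using YN_upper[of 1 \<xi> N] by simp
  also have "\<dots> \<le> (\<Sum>k\<le>N. pmf \<xi> k * 1 ^ k)"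
    using Suc YN_nonneg[of 1 \<xi> N] by (intro sum_mono mult_left_mono power_mono) auto
  also have "\<dots> \<le> pgf \<xi> 1" by (rule pgf_partial_le) auto
  finally show ?case by (simp add: pgf_1)
qed

lemma size_partial_le_1: "(\<Sum>n\<le>N. gw_size_prob \<xi> n) \<le> 1"
  using YN_le_1[of \<xi> N] by (simp add: YN_eq)

lemma size_summable: "summable (gw_size_prob \<xi>)"
proof (rule summableI_nonneg_bounded[where x = 1])
  fix n show "sum (gw_size_prob \<xi>) {..<n} \<le> 1"
  proof (cases n)
    case (Suc m)
    then show ?thesis using size_partial_le_1[of \<xi> m] by (simp add: lessThan_Suc_atMost)
  qed simp
qed (rule gw_size_prob_nonneg)

lemma size_suminf_le_1: "(\<Sum>n. gw_size_prob \<xi> n) \<le> 1"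
proof (rule suminf_le_const[OF size_summable])
  fix n show "sum (gw_size_prob \<xi>) {..<n} \<le> 1"
  proof (cases n)
    case (Suc m)
    then show ?thesis using size_partial_le_1[of \<xi> m] by (simp add: lessThan_Suc_atMost)
  qed simp
qed

lemma PS_summable:
  assumes "\<And>n. 0 \<le> p n" "summable p" "\<bar>z\<bar> \<le> 1"
  shows "summable (\<lambda>n. p n * (z::real) ^ n)"
  by (rule summable_comparison_test[OF _ assms(2)])
     (use assms in \<open>auto intro!: exI[of _ 0] simp: abs_mult power_abs intro!: mult_left_le power_le_one\<close>)

lemma size_PS_summable: "\<bar>z\<bar> \<le> 1 \<Longrightarrow> summable (\<lambda>n. gw_size_prob \<xi> n * (z::real) ^ n)"
  by (rule PS_summable[OF gw_size_prob_nonneg size_summable])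

lemma YN_le_PS: "0 \<le> z \<Longrightarrow> z \<le> 1 \<Longrightarrow> YN \<xi> N z \<le> PS (gw_size_prob \<xi>) z"
  unfolding YN_eq PS_def using size_PS_summable[of z \<xi>]
  by (subst atLeast0AtMost[symmetric], subst atLeastLessThanSuc_atLeastAtMost[symmetric], subst atLeast0LessThan)
     (rule sum_le_suminf, auto intro!: mult_nonneg_nonneg gw_size_prob_nonneg)

lemma YN_tendsto: "\<bar>z\<bar> \<le> 1 \<Longrightarrow> (\<lambda>N. YN \<xi> N z) \<longlonglongrightarrow> PS (gw_size_prob \<xi>) z"
proof -
  assume z: "\<bar>z\<bar> \<le> 1"
  have "(\<lambda>N. \<Sum>n<N. gw_size_prob \<xi> n * z ^ n) \<longlonglongrightarrow> PS (gw_size_prob \<xi>) z"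
    unfolding PS_def using summable_LIMSEQ[OF size_PS_summable[OF z]] .
  then have "(\<lambda>N. \<Sum>n<Suc N. gw_size_prob \<xi> n * z ^ n) \<longlonglongrightarrow> PS (gw_size_prob \<xi>) z"
    by (rule LIMSEQ_Suc)
  then show ?thesis by (simp add: YN_eq lessThan_Suc_atMost)
qed

lemma Y_fixed:
  assumes z: "0 \<le> z" "z \<le> 1"
  shows "PS (gw_size_prob \<xi>) z = z * pgf \<xi> (PS (gw_size_prob \<xi>) z)"
proof -
  define Y where "Y = PS (gw_size_prob \<xi>) z"
  have Y0: "0 \<le> Y" unfolding Y_def PS_def
    using z by (intro suminf_nonneg size_PS_summable) (auto intro!: mult_nonneg_nonneg gw_size_prob_nonneg)
  have Y1: "Y \<le> 1"
  proof -
    have "Y \<le> (\<Sum>n. gw_size_prob \<xi> n)" unfolding Y_def PS_def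
      using z by (intro suminf_le size_PS_summable size_summable)
         (auto intro!: mult_left_le power_le_one gw_size_prob_nonneg)
    then show ?thesis using size_suminf_le_1[of \<xi>] by linarith
  qed
  have YNY: "YN \<xi> N z \<le> Y" for N using YN_le_PS[OF z] by (simp add: Y_def)
  have "Y \<le> z * pgf \<xi> Y"
  proof -
    have "YN \<xi> (Suc N) z \<le> z * pgf \<xi> Y" for N
    proof -
      have "YN \<xi> (Suc N) z \<le> z * (\<Sum>k\<le>N. pmf \<xi> k * (YN \<xi> N z) ^ k)" by (rule YN_upper[OF z(1)])
      also have "\<dots> \<le> z * (\<Sum>k\<le>N. pmf \<xi> k * Y ^ k)"
        using z YNY YN_nonneg[OF z(1)] by (intro mult_left_mono sum_mono mult_left_mono power_mono) auto
      also have "\<dots> \<le> z * pgf \<xi> Y"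
        using z Y0 Y1 by (intro mult_left_mono pgf_partial_le) auto
      finally show ?thesis .
    qed
    moreover have "(\<lambda>N. YN \<xi> (Suc N) z) \<longlonglongrightarrow> Y"
      unfolding Y_def using YN_tendsto[of z \<xi>] z by (intro LIMSEQ_Suc) auto
    ultimately show ?thesis by (intro LIMSEQ_le_const2) auto
  qed
  moreover have "z * pgf \<xi> Y \<le> Y"
  proof -
    have K: "z * (\<Sum>k\<le>K. pmf \<xi> k * Y ^ k) \<le> Y" for K
    proof -
      have "z * (\<Sum>k\<le>K. pmf \<xi> k * (YN \<xi> M z) ^ k) \<le> Y" for M
        using YN_lower[OF z(1), where K=K and M=M and \<xi>=\<xi>] YNY[of "Suc (K * M)"] by linarith
      moreover have "(\<lambda>M. z * (\<Sum>k\<le>K. pmf \<xi> k * (YN \<xi> M z) ^ k)) \<longlonglongrightarrow> z * (\<Sum>k\<le>K. pmf \<xi> k * Y ^ k)"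
        unfolding Y_def using YN_tendsto[of z \<xi>] z by (intro tendsto_intros) auto
      ultimately show ?thesis by (intro LIMSEQ_le_const2) auto
    qed
    have "z * pgf \<xi> Y = (\<Sum>k. z * (pmf \<xi> k * Y ^ k))"
      unfolding pgf_def using Y0 Y1 by (intro suminf_mult[symmetric] pgf_summable) auto
    also have "\<dots> \<le> Y"
    proof (rule suminf_le_const)
      show "summable (\<lambda>k. z * (pmf \<xi> k * Y ^ k))" using Y0 Y1 by (intro summable_mult pgf_summable) auto
      fix n show "(\<Sum>k<n. z * (pmf \<xi> k * Y ^ k)) \<le> Y"
      proof (cases n)
        case (Suc m)
        then show ?thesis using K[of m] by (simp add: lessThan_Suc_atMost sum_distrib_left)
      qed (simp add: Y0)
    qed
    finally show ?thesis .
  qed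
  ultimately show ?thesis unfolding Y_def by linarith
qed



lemma Y_compare:
  assumes z: "0 < z" "z < 1" and p0: "pmf \<xi>A 0 > 0"
    and lt: "\<And>y. 0 < y \<Longrightarrow> y < 1 \<Longrightarrow> pgf \<xi>A y < pgf \<xi>B y"
  shows "PS (gw_size_prob \<xi>A) z < PS (gw_size_prob \<xi>B) z"
proof -
  define YA where "YA = PS (gw_size_prob \<xi>A) z"
  define YB where "YB = PS (gw_size_prob \<xi>B) z"
  have fA: "YA = z * pgf \<xi>A YA" unfolding YA_def using z by (intro Y_fixed) auto
  have fB: "YB = z * pgf \<xi>B YB" unfolding YB_def using z by (intro Y_fixed) auto
  have YA0: "0 \<le> YA" and YB0: "0 \<le> YB" unfolding YA_def YB_def PS_def using z
    by (auto intro!: suminf_nonneg size_PS_summable mult_nonneg_nonneg gw_size_prob_nonneg)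
  have YA1': "YA \<le> (\<Sum>n. gw_size_prob \<xi>A n)" unfolding YA_def PS_def
    using z by (intro suminf_le size_PS_summable size_summable)
         (auto intro!: mult_left_le power_le_one gw_size_prob_nonneg)
  have YA1: "YA \<le> 1" using YA1' size_suminf_le_1[of \<xi>A] by linarith
  have YB1: "YB \<le> 1" unfolding YB_def PS_def
    using z size_suminf_le_1[of \<xi>B] 
    by (intro order.trans[OF suminf_le size_suminf_le_1] size_PS_summable size_summable)
         (auto intro!: mult_left_le power_le_one gw_size_prob_nonneg)
  have "(\<Sum>n\<in>{1}. gw_size_prob \<xi>A n * z ^ n) \<le> YA" unfolding YA_def PS_def
    using z by (intro sum_le_suminf size_PS_summable)
       (auto intro!: mult_nonneg_nonneg gw_size_prob_nonneg)
  then have "gw_size_prob \<xi>A 1 * z \<le> YA" by simp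
  moreover have "gw_size_prob \<xi>A 1 * z > 0" using p0 z gw_size_prob_1[of \<xi>A] by (metis mult_pos_pos)
  ultimately have YApos: "0 < YA" by linarith
  have "YA \<le> z" using fA pgf_le_1[OF YA0 YA1, of \<xi>A] z by (metis less_eq_real_def mult_left_le)
  then have YAlt1: "YA < 1" using z by linarith
  have "YB \<le> z" using fB pgf_le_1[OF YB0 YB1, of \<xi>B] z by (metis less_eq_real_def mult_left_le)
  then have YBlt1: "YB < 1" using z by linarith
  have hA: "YA < z * pgf \<xi>B YA" using fA lt[OF YApos YAlt1] z by (metis mult_strict_left_mono)
  show ?thesis
  proof (rule ccontr)
    assume "\<not> ?thesis"
    then have le: "YB \<le> YA" unfolding YA_def YB_def by simp
    define l where "l = (YA - YB) / (1 - YB)"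
    have l0: "0 \<le> l" and l1: "l \<le> 1" using le YBlt1 YAlt1 by (auto simp: l_def field_simps)
    have h: "l * (1 - YB) = YA - YB" unfolding l_def using YBlt1 by simp
    have YAeq: "YA = (1 - l) * YB + l * 1" using h unfolding right_diff_distrib left_diff_distrib by linarith
    have "pgf \<xi>B YA \<le> (1 - l) * pgf \<xi>B YB + l * pgf \<xi>B 1"
      using convex_onD[OF pgf_convex[of \<xi>B], of l YB 1] l0 l1 YB0 YB1 YAeq by simp
    then have c: "pgf \<xi>B YA \<le> (1 - l) * pgf \<xi>B YB + l" by (simp add: pgf_1)
    have "z * pgf \<xi>B YA \<le> z * ((1 - l) * pgf \<xi>B YB + l)"
      using c z by (intro mult_left_mono) auto
    also have "\<dots> = (1 - l) * (z * pgf \<xi>B YB) + l * z" by (simp add: algebra_simps)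
    also have "\<dots> = (1 - l) * YB + l * z" using fB by simp
    also have "\<dots> \<le> YA" using YAeq l0 z by (simp add: mult_left_le)
    finally show False using hA by simp
  qed
qed

lemma pgf_finite:
  assumes "\<And>k. k > M \<Longrightarrow> pmf \<xi> k = 0"
  shows "pgf \<xi> y = (\<Sum>k\<le>M. pmf \<xi> k * y ^ k)"
  unfolding pgf_def by (rule suminf_finite) (auto simp: assms not_le)

lemma pmf_xi1: "m \<ge> 1 \<Longrightarrow> pmf (xi1 m) k = (m choose k) * (1 / real m) ^ k * (1 - 1 / real m) ^ (m - k)"
  unfolding xi1_def by (subst pmf_binomial) auto

lemma pgf_xi1: "m \<ge> 1 \<Longrightarrow> pgf (xi1 m) y = (y / real m + (1 - 1 / real m)) ^ m"
proof -
  assume m: "m \<ge> 1"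
  have "pgf (xi1 m) y = (\<Sum>k\<le>m. pmf (xi1 m) k * y ^ k)"
    using m by (intro pgf_finite) (auto simp: pmf_xi1 binomial_eq_0)
  also have "\<dots> = (\<Sum>k\<le>m. (m choose k) * (y / real m) ^ k * (1 - 1 / real m) ^ (m - k))"
    using m by (intro sum.cong) (auto simp: pmf_xi1 power_divide)
  also have "\<dots> = (y / real m + (1 - 1 / real m)) ^ m"
    by (subst binomial_ring) (simp add: atLeast0AtMost)
  finally show ?thesis .
qed

lemma pmf_xi5: "m \<ge> 1 \<Longrightarrow> pmf (xi5 m) k = (if k = m then 1 / real m else 0) + (if k = 0 then 1 - 1 / real m else 0)"
proof -
  assume m: "m \<ge> 1"
  have p: "0 \<le> 1 / real m" "1 / real m \<le> 1" using m by auto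
  have "pmf (xi5 m) k = measure (measure_pmf (bernoulli_pmf (1 / real m))) ((\<lambda>b. if b then m else 0) -` {k})"
    unfolding xi5_def by (rule pmf_map)
  moreover have "(\<lambda>b. if b then m else 0) -` {k} = (if k = m then {True} else {}) \<union> (if k = 0 then {False} else {})"
    using m by (auto split: if_splits)
  ultimately show ?thesis using m p
    by (cases "k = m"; cases "k = 0") (auto simp: measure_pmf_single simp del: of_nat_eq_0_iff)
qed

lemma pgf_xi5: "m \<ge> 1 \<Longrightarrow> pgf (xi5 m) y = (1 - 1 / real m) + y ^ m / real m"
proof -
  assume m: "m \<ge> 1"
  have "pgf (xi5 m) y = (\<Sum>k\<le>m. pmf (xi5 m) k * y ^ k)"
    using m by (intro pgf_finite) (auto simp: pmf_xi5)
  also have "\<dots> = (\<Sum>k\<in>{0, m}. pmf (xi5 m) k * y ^ k)"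
    by (rule sum.mono_neutral_right) (auto simp: pmf_xi5 m)
  also have "\<dots> = (1 - 1 / real m) + y ^ m / real m"
    using m by (simp add: pmf_xi5)
  finally show ?thesis .
qed

lemma xi3_eq: "xi3 = xi5 2"
  unfolding xi3_def xi5_def by simp

lemma pgf_xi2: "pgf xi2 y = exp (y - 1)"
proof -
  have "(\<lambda>k. exp (-1) * (y ^ k /\<^sub>R fact k)) sums (exp (-1) * exp y)"
    by (intro sums_mult exp_converges)
  moreover have "(\<lambda>k. exp (-1) * (y ^ k /\<^sub>R fact k)) = (\<lambda>k. pmf xi2 k * y ^ k)"
    by (auto simp: xi2_def pmf_poisson divide_simps)
  ultimately show ?thesis unfolding pgf_def by (simp add: sums_iff exp_diff mult_exp_exp[symmetric]) (simp add: exp_minus field_simps)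
qed

lemma pgf_xi4: "0 \<le> y \<Longrightarrow> y < 1 \<Longrightarrow> pgf xi4 y = 1 / (2 - y)"
proof -
  assume y: "0 \<le> y" "y < 1"
  have "(\<lambda>k. (1/2) * (y/2) ^ k) sums ((1/2) * (1 / (1 - y/2)))"
    using y by (intro sums_mult geometric_sums) auto
  moreover have "(\<lambda>k. (1/2) * (y/2) ^ k) = (\<lambda>k. pmf xi4 k * y ^ k)"
    by (auto simp: xi4_def pmf_geometric power_divide)
  ultimately show ?thesis unfolding pgf_def using y by (simp add: sums_iff field_simps)
qed



lemma bern_strict:
  fixes u :: real
  assumes "0 < u" "1 \<le> k"
  shows "1 + real (Suc k) * u < (1 + u) ^ Suc k"
proof -
  have b: "1 + real k * u \<le> (1 + u) ^ k" using Bernoulli_inequality[of u k] assms by simp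
  have "1 + real (Suc k) * u < (1 + u) * (1 + real k * u)"
    using assms by (simp add: algebra_simps)
  also have "\<dots> \<le> (1 + u) * (1 + u) ^ k" using b assms by (intro mult_left_mono) auto
  finally show ?thesis by simp
qed

lemma aux_eq: "r \<noteq> 0 \<Longrightarrow> y / r + (1 - 1 / r) = 1 - (1 - y) / (r::real)"
  by (simp add: field_simps)

lemma ineq_a:
  fixes y :: real
  assumes y: "0 < y" "y < 1" and m: "1 \<le> m"
  shows "(y / real m + (1 - 1 / real m)) ^ m < (y / real (Suc m) + (1 - 1 / real (Suc m))) ^ Suc m"
proof -
  define x where "x = 1 - y"
  have x: "0 < x" "x < 1" using y by (auto simp: x_def)
  define a where "a = 1 - x / real m"
  define b where "b = 1 - x / real (Suc m)"
  have ea: "y / real m + (1 - 1 / real m) = a" unfolding a_def x_def using m by (intro aux_eq) auto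
  have eb: "y / real (Suc m) + (1 - 1 / real (Suc m)) = b" unfolding b_def x_def by (intro aux_eq) auto
  have a0: "0 < a" unfolding a_def using x m by (simp add: field_simps)
  have b0: "0 < b" unfolding b_def using x by (simp add: field_simps)
  define u where "u = (b - a) / a"
  have bau: "b = a * (1 + u)" unfolding u_def using a0 by (simp add: field_simps)
  have "x / real (Suc m) < x / real m" using x m by (intro divide_strict_left_mono) auto
  then have u0: "0 < u" unfolding u_def a_def b_def using a0 a_def by (intro divide_pos_pos) auto
  have k1: "a * (1 + real (Suc m) * u) = a + real (Suc m) * (b - a)" unfolding u_def using a0 by (simp add: field_simps)
  have mm: "real m + real m * real m \<noteq> 0" "real m \<noteq> 0" using m by (auto, smt (verit, best) of_nat_0_le_iff of_nat_1 of_nat_mono mult_nonneg_nonneg)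
  have k2: "real (Suc m) * (b - a) = x / real m" unfolding a_def b_def using m mm by (simp add: field_simps)
  have key: "a * (1 + real (Suc m) * u) = 1" using k1 k2 a_def by simp
  have "a ^ m = a ^ Suc m * (1 + real (Suc m) * u)" using key by (simp add: mult.assoc)
  also have "\<dots> < a ^ Suc m * (1 + u) ^ Suc m"
    using bern_strict[OF u0 m] a0 by (intro mult_strict_left_mono) auto
  also have "\<dots> = b ^ Suc m" by (simp add: bau power_mult_distrib)
  finally have "a ^ m < b ^ Suc m" .
  then show ?thesis by (simp only: ea eb)
qed

lemma one_minus_lt_exp: "0 < (v::real) \<Longrightarrow> 1 - v < exp (- v)"
proof (cases "v \<ge> 2")
  case True
  then show ?thesis by (smt (verit) exp_gt_zero)
next
  case False
  assume v: "0 < v"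
  have h: "1 - v / 2 \<le> exp (- v / 2)" using exp_ge_add_one_self[of "- v / 2"] by simp
  have "1 - v < (1 - v / 2) ^ 2" using v by (simp add: power2_eq_square algebra_simps)
  also have "\<dots> \<le> exp (- v / 2) ^ 2" using h False by (intro power_mono) auto
  also have "\<dots> = exp (- v)" by (simp add: exp_double[symmetric])
  finally show ?thesis .
qed

lemma ineq_b:
  fixes y :: real
  assumes y: "0 < y" "y < 1" and m: "1 \<le> m"
  shows "(y / real m + (1 - 1 / real m)) ^ m < exp (y - 1)"
proof -
  define v where "v = (1 - y) / real m"
  have v: "0 < v" unfolding v_def using y m by simp
  have e: "y / real m + (1 - 1 / real m) = 1 - v" unfolding v_def using m by (simp add: field_simps)
  have "0 \<le> 1 - v" unfolding v_def using y m by (simp add: field_simps)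
  then have "(1 - v) ^ m < exp (- v) ^ m" using one_minus_lt_exp[OF v] m by (intro power_strict_mono) auto
  also have "exp (- v) ^ m = exp (y - 1)" unfolding v_def using m by (simp add: exp_of_nat_mult[symmetric] field_simps)
  finally show ?thesis by (simp add: e)
qed

lemma ineq_c:
  fixes y :: real
  assumes y: "0 < y" "y < 1"
  shows "exp (y - 1) < (1 - 1 / real (2::nat)) + y ^ 2 / real (2::nat)"
proof -
  define x where "x = 1 - y"
  have x: "0 < x" "x < 1" using y by (auto simp: x_def)
  have t: "1 + x + x\<^sup>2 / 2 \<le> exp x" using exp_lower_Taylor_quadratic[of x] x by simp
  have p: "0 < 1 + x + x\<^sup>2 / 2" using x by (simp add: add_pos_nonneg)
  have "exp (y - 1) = 1 / exp x" unfolding x_def by (metis exp_minus minus_diff_eq inverse_eq_divide)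
  also have "\<dots> \<le> 1 / (1 + x + x\<^sup>2 / 2)" using t p by (intro divide_left_mono) auto
  also have "\<dots> < 1 - x + x\<^sup>2 / 2"
  proof -
    have "(1 - x + x\<^sup>2 / 2) * (1 + x + x\<^sup>2 / 2) = 1 + x ^ 4 / 4" by (simp add: algebra_simps power2_eq_square power4_eq_xxxx)
    also have "\<dots> > 1" using x by simp
    finally show ?thesis using p by (simp add: divide_less_eq)
  qed
  also have "\<dots> = (1 - 1 / real (2::nat)) + y ^ 2 / real (2::nat)" unfolding x_def by (simp add: power2_eq_square field_simps)
  finally show ?thesis .
qed

lemma ineq_d:
  fixes y :: real
  assumes y: "0 < y" "y < 1"
  shows "(1 - 1 / real (2::nat)) + y ^ 2 / real (2::nat) < 1 / (2 - y)"
proof -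
  have "(1 + y ^ 2) * (2 - y) = 2 - y * (1 - y) ^ 2" by (simp add: power2_eq_square algebra_simps)
  then have "((1 - 1 / 2) + y ^ 2 / 2) * (2 - y) = 1 - y * (1 - y) ^ 2 / 2" by (simp add: field_simps)
  also have "\<dots> < 1" using y by simp
  finally show ?thesis using y by (simp add: less_divide_eq)
qed

lemma ineq_e:
  fixes y :: real
  assumes y: "0 < y" "y < 1"
  shows "1 / (2 - y) < (1 - 1 / real (3::nat)) + y ^ 3 / real (3::nat)"
proof -
  have "(2 + y ^ 3) * (2 - y) = 3 + (1 - y) ^ 3 * (1 + y)" by (simp add: power3_eq_cube algebra_simps)
  then have "((1 - 1 / 3) + y ^ 3 / 3) * (2 - y) = 1 + (1 - y) ^ 3 * (1 + y) / 3" by (simp add: field_simps)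
  also have "\<dots> > 1" using y by simp
  finally show ?thesis using y by (simp add: divide_less_eq)
qed

lemma ineq_f:
  fixes y :: real
  assumes y: "0 < y" "y < 1" and m: "1 \<le> m"
  shows "(1 - 1 / real m) + y ^ m / real m < (1 - 1 / real (Suc m)) + y ^ Suc m / real (Suc m)"
proof -
  have lt: "real m * y ^ m < (\<Sum>j<m. y ^ j)"
  proof -
    have "real m * y ^ m = (\<Sum>j<m. y ^ m)" by simp
    also have "\<dots> < (\<Sum>j<m. y ^ j)"
      using m y by (intro sum_strict_mono) (auto intro!: power_strict_decreasing simp: lessThan_empty_iff)
    finally show ?thesis .
  qed
  have "real (Suc m) * (1 - y ^ m) - real m * (1 - y ^ Suc m) = (1 - y ^ m) - real m * y ^ m * (1 - y)"
    by (simp add: algebra_simps)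
  also have "\<dots> = (1 - y) * ((\<Sum>j<m. y ^ j) - real m * y ^ m)"
    by (simp add: one_diff_power_eq algebra_simps)
  also have "\<dots> > 0" using lt y by simp
  finally have h: "real m * (1 - y ^ Suc m) < real (Suc m) * (1 - y ^ m)" by simp
  have h2: "(1 - y ^ Suc m) / real (Suc m) < (1 - y ^ m) / real m"
    using h m by (simp add: divide_less_eq less_divide_eq mult.commute)
  have e: "r \<noteq> 0 \<Longrightarrow> (1 - 1 / r) + w / r = 1 - (1 - w) / r" for r w :: real by (simp add: field_simps)
  show ?thesis using h2 e[of "real m" "y ^ m"] e[of "real (Suc m)" "y ^ Suc m"] m by simp
qed



lemma gamma_scale:
  assumes a: "0 < a" and s: "0 < s"
  shows "(\<integral>\<^sup>+t. ennreal (indicator {0..} t * t powr (a - 1) * exp (- (s * t))) \<partial>lborel) = ennreal (s powr (- a) * Gamma a)"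
proof -
  define f where "f = (\<lambda>u::real. ennreal (indicator {0..} u * u powr (a - 1) / exp u))"
  have fm: "f \<in> borel_measurable borel" unfolding f_def by measurable
  have "ennreal (Gamma a) = (\<integral>\<^sup>+u. f u \<partial>lborel)" unfolding f_def by (rule Gamma_conv_nn_integral_real[OF a])
  also have "\<dots> = ennreal \<bar>s\<bar> * (\<integral>\<^sup>+x. f (0 + s * x) \<partial>lborel)"
    using s by (intro nn_integral_real_affine[OF fm]) auto
  also have "(\<integral>\<^sup>+x. f (0 + s * x) \<partial>lborel) = (\<integral>\<^sup>+x. ennreal (s powr (a - 1)) * ennreal (indicator {0..} x * x powr (a - 1) * exp (- (s * x))) \<partial>lborel)"
  proof (rule nn_integral_cong)
    fix x :: real
    show "f (0 + s * x) = ennreal (s powr (a - 1)) * ennreal (indicator {0..} x * x powr (a - 1) * exp (- (s * x)))"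
      using s by (cases "x \<ge> 0") (auto simp: f_def indicator_def powr_mult exp_minus field_simps ennreal_mult'[symmetric] zero_le_mult_iff)
  qed
  also have "\<dots> = ennreal (s powr (a - 1)) * (\<integral>\<^sup>+x. ennreal (indicator {0..} x * x powr (a - 1) * exp (- (s * x))) \<partial>lborel)"
    by (rule nn_integral_cmult) measurable
  finally have "ennreal (Gamma a) = ennreal (s * s powr (a - 1)) * (\<integral>\<^sup>+x. ennreal (indicator {0..} x * x powr (a - 1) * exp (- (s * x))) \<partial>lborel)"
    using s by (simp add: ennreal_mult' mult.assoc)
  then have "ennreal (s powr (- a)) * ennreal (Gamma a) = ennreal (s powr (- a) * (s * s powr (a - 1))) * (\<integral>\<^sup>+x. ennreal (indicator {0..} x * x powr (a - 1) * exp (- (s * x))) \<partial>lborel)"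
    using s by (simp add: ennreal_mult' mult.assoc)
  moreover have "s powr (- a) * (s * s powr (a - 1)) = 1"
    using s by (simp add: powr_add[symmetric] powr_mult_base)
  ultimately show ?thesis using s a by (simp add: ennreal_mult' Gamma_real_pos)
qed

lemma not_AE_lborel:
  fixes P :: "real \<Rightarrow> bool"
  assumes "\<And>t. 0 < t \<Longrightarrow> t < 1 \<Longrightarrow> \<not> P t"
  shows "\<not> (AE t in lborel. P t)"
proof
  assume "AE t in lborel. P t"
  then obtain N where N: "{x \<in> space lborel. \<not> P x} \<subseteq> N" "emeasure lborel N = 0" "N \<in> sets lborel"
    by (rule AE_E)
  have "{0<..<1::real} \<subseteq> N" using N(1) assms by auto
  then have "emeasure lborel {0<..<1::real} \<le> emeasure lborel N" using N(3) by (intro emeasure_mono) auto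
  then show False using N(2) by simp
qed

lemma PS_exp_summable:
  fixes p :: "nat \<Rightarrow> real"
  assumes "\<And>n. 0 \<le> p n" "summable p" "0 \<le> t"
  shows "summable (\<lambda>n. p n * exp (- t) ^ n)"
  using PS_summable[of p "exp (- t)"] assms by simp

lemma PS_ennreal:
  fixes p :: "nat \<Rightarrow> real"
  assumes p: "\<And>n. 0 \<le> p n" "summable p" and c: "0 \<le> c" and t: "0 \<le> t"
  shows "ennreal (c * PS p (exp (- t))) = (\<Sum>n. ennreal (c * (p n * exp (- t) ^ n)))"
proof -
  have s: "summable (\<lambda>n. p n * exp (- t) ^ n)" by (rule PS_exp_summable[OF p t])
  have "c * PS p (exp (- t)) = (\<Sum>n. c * (p n * exp (- t) ^ n))"
    unfolding PS_def by (rule suminf_mult[OF s, symmetric])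
  also have "ennreal \<dots> = (\<Sum>n. ennreal (c * (p n * exp (- t) ^ n)))"
    using p c by (intro suminf_ennreal2[symmetric] summable_mult s) auto
  finally show ?thesis by simp
qed

lemma neg_repr:
  fixes p :: "nat \<Rightarrow> real" and \<alpha> :: real
  assumes p: "\<And>n. 0 \<le> p n" "summable p" "p 0 = 0" and \<alpha>: "\<alpha> < 0"
  shows "summable (\<lambda>n. p n * real n powr \<alpha>)"
    and "(\<integral>\<^sup>+t. ennreal (indicator {0..} t * t powr (- \<alpha> - 1) * PS p (exp (- t))) \<partial>lborel)
         = ennreal (Gamma (- \<alpha>) * (\<Sum>n. p n * real n powr \<alpha>))"
proof -
  have le1: "real n powr \<alpha> \<le> 1" for n
  proof (cases "n = 0")
    case False
    then have "real n powr \<alpha> \<le> real n powr 0" using \<alpha> by (intro powr_mono) auto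
    then show ?thesis using False by simp
  qed simp
  show sa: "summable (\<lambda>n. p n * real n powr \<alpha>)"
    by (rule summable_comparison_test[OF _ p(2)])
       (use p le1 in \<open>auto intro!: exI[of _ 0] mult_left_le simp: abs_mult\<close>)
  let ?a = "- \<alpha>"
  have a: "0 < ?a" using \<alpha> by simp
  have eq: "(\<lambda>t. ennreal (indicator {0..} t * t powr (?a - 1) * PS p (exp (- t))))
     = (\<lambda>t. \<Sum>n. ennreal (indicator {0..} t * t powr (?a - 1) * (p n * exp (- t) ^ n)))"
  proof
    fix t :: real
    show "ennreal (indicator {0..} t * t powr (?a - 1) * PS p (exp (- t))) =
       (\<Sum>n. ennreal (indicator {0..} t * t powr (?a - 1) * (p n * exp (- t) ^ n)))"
    proof (cases "0 \<le> t")
      case True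
      then show ?thesis using PS_ennreal[OF p(1,2), of "indicator {0..} t * t powr (?a - 1)" t] by simp
    next
      case False
      then show ?thesis by simp
    qed
  qed
  have trm: "(\<integral>\<^sup>+t. ennreal (indicator {0..} t * t powr (?a - 1) * (p n * exp (- t) ^ n)) \<partial>lborel)
      = ennreal (Gamma ?a * (p n * real n powr \<alpha>))" for n
  proof (cases "n = 0")
    case True
    then show ?thesis using p(3) by simp
  next
    case False
    have "(\<integral>\<^sup>+t. ennreal (indicator {0..} t * t powr (?a - 1) * (p n * exp (- t) ^ n)) \<partial>lborel)
        = (\<integral>\<^sup>+t. ennreal (p n) * ennreal (indicator {0..} t * t powr (?a - 1) * exp (- (real n * t))) \<partial>lborel)"
      using p(1)[of n] by (intro nn_integral_cong) (auto simp: ennreal_mult'[symmetric] exp_of_nat_mult[symmetric] algebra_simps)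
    also have "\<dots> = ennreal (p n) * (\<integral>\<^sup>+t. ennreal (indicator {0..} t * t powr (?a - 1) * exp (- (real n * t))) \<partial>lborel)"
      by (rule nn_integral_cmult) measurable
    also have "\<dots> = ennreal (p n) * ennreal (real n powr (- ?a) * Gamma ?a)"
      using False by (subst gamma_scale[OF a]) auto
    also have "\<dots> = ennreal (Gamma ?a * (p n * real n powr \<alpha>))"
      using p(1)[of n] by (simp add: ennreal_mult'[symmetric] algebra_simps)
    finally show ?thesis .
  qed
  have "(\<integral>\<^sup>+t. ennreal (indicator {0..} t * t powr (?a - 1) * PS p (exp (- t))) \<partial>lborel)
       = (\<Sum>n. (\<integral>\<^sup>+t. ennreal (indicator {0..} t * t powr (?a - 1) * (p n * exp (- t) ^ n)) \<partial>lborel))"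
    unfolding eq by (rule nn_integral_suminf) measurable
  also have "\<dots> = (\<Sum>n. ennreal (Gamma ?a * (p n * real n powr \<alpha>)))" by (simp only: trm)
  also have "\<dots> = ennreal (\<Sum>n. Gamma ?a * (p n * real n powr \<alpha>))"
    using p(1) a by (intro suminf_ennreal2 summable_mult sa) (auto intro!: mult_nonneg_nonneg Gamma_real_pos less_imp_le)
  also have "(\<Sum>n. Gamma ?a * (p n * real n powr \<alpha>)) = Gamma ?a * (\<Sum>n. p n * real n powr \<alpha>)"
    by (rule suminf_mult[OF sa])
  finally show "(\<integral>\<^sup>+t. ennreal (indicator {0..} t * t powr (- \<alpha> - 1) * PS p (exp (- t))) \<partial>lborel)
         = ennreal (Gamma (- \<alpha>) * (\<Sum>n. p n * real n powr \<alpha>))" .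
qed

lemma PS_exp_meas: "(\<lambda>t. PS p (exp (- t))) \<in> borel_measurable borel"
  unfolding PS_def by measurable

lemma cmp_neg:
  fixes p q :: "nat \<Rightarrow> real" and \<alpha> :: real
  assumes p: "\<And>n. 0 \<le> p n" "summable p" "p 0 = 0"
    and q: "\<And>n. 0 \<le> q n" "summable q" "q 0 = 0"
    and lt: "\<And>z. 0 < z \<Longrightarrow> z < 1 \<Longrightarrow> PS p z < PS q z" and \<alpha>: "\<alpha> < 0"
  shows "(\<Sum>n. p n * real n powr \<alpha>) < (\<Sum>n. q n * real n powr \<alpha>)"
proof -
  let ?f = "\<lambda>t. ennreal (indicator {0..} t * t powr (- \<alpha> - 1) * PS p (exp (- t)))"
  let ?g = "\<lambda>t. ennreal (indicator {0..} t * t powr (- \<alpha> - 1) * PS q (exp (- t)))"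
  have fm: "?f \<in> borel_measurable lborel" and gm: "?g \<in> borel_measurable lborel"
    using PS_exp_meas[of p] PS_exp_meas[of q] by measurable
  have "integral\<^sup>N lborel ?f < integral\<^sup>N lborel ?g"
  proof (rule nn_integral_less[OF fm gm])
    show "integral\<^sup>N lborel ?f \<noteq> \<infinity>" by (simp add: neg_repr(2)[OF p \<alpha>])
    show "AE t in lborel. ?f t \<le> ?g t"
    proof (rule AE_I2)
      fix t :: real
      show "?f t \<le> ?g t"
      proof (cases "t > 0")
        case True
        have "PS p (exp (- t)) < PS q (exp (- t))" using True by (intro lt) auto
        then show ?thesis using True by (intro ennreal_leI mult_left_mono) auto
      next
        case False
        then have "t < 0 \<or> t = 0" by auto
        then show ?thesis by auto
      qed
    qed
    show "\<not> (AE t in lborel. ?g t \<le> ?f t)"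
    proof (rule not_AE_lborel)
      fix t :: real assume t: "0 < t" "t < 1"
      have "PS p (exp (- t)) < PS q (exp (- t))" using t by (intro lt) auto
      then have "t powr (- \<alpha> - 1) * PS p (exp (- t)) < t powr (- \<alpha> - 1) * PS q (exp (- t))"
        using t by (intro mult_strict_left_mono) auto
      moreover have "0 \<le> t powr (- \<alpha> - 1) * PS p (exp (- t))"
        unfolding PS_def using t p by (intro mult_nonneg_nonneg suminf_nonneg PS_exp_summable) auto
      ultimately have "ennreal (t powr (- \<alpha> - 1) * PS p (exp (- t))) < ennreal (t powr (- \<alpha> - 1) * PS q (exp (- t)))"
        by (intro ennreal_lessI) auto
      then show "\<not> ?g t \<le> ?f t" using t by (simp add: not_le)
    qed
  qed
  then have "ennreal (Gamma (- \<alpha>) * (\<Sum>n. p n * real n powr \<alpha>)) < ennreal (Gamma (- \<alpha>) * (\<Sum>n. q n * real n powr \<alpha>))"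
    by (simp add: neg_repr(2)[OF p \<alpha>] neg_repr(2)[OF q \<alpha>])
  then have "Gamma (- \<alpha>) * (\<Sum>n. p n * real n powr \<alpha>) < Gamma (- \<alpha>) * (\<Sum>n. q n * real n powr \<alpha>)"
    by (metis ennreal_leI not_le)
  moreover have "0 < Gamma (- \<alpha>)" using \<alpha> by (intro Gamma_real_pos) auto
  ultimately show ?thesis by simp
qed

lemma pos_kernel:
  fixes \<beta> n G :: real
  assumes \<beta>: "0 \<le> \<beta>" "\<beta> < 1" and n: "1 \<le> n"
    and G: "((\<lambda>s. s powr (\<beta> - 1)) has_integral G) {1..n}"
  shows "(\<integral>\<^sup>+t. ennreal (indicator {0..} t * t powr (- \<beta> - 1) * (exp (- t) - exp (- (n * t)))) \<partial>lborel)
         = ennreal (Gamma (1 - \<beta>) * G)"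
proof -
  define H where "H t s = ennreal (indicator {0..} t * indicator {1..n} s * t powr (- \<beta>) * exp (- (s * t)))" for t s :: real
  have inner_s: "(\<integral>\<^sup>+s. H t s \<partial>lborel) = ennreal (indicator {0..} t * t powr (- \<beta> - 1) * (exp (- t) - exp (- (n * t))))" for t
  proof (cases "t > 0")
    case False
    then have "t < 0 \<or> t = 0" by auto
    then show ?thesis by (auto simp: H_def)
  next
    case True
    define F where "F s = - (t powr (- \<beta>) * exp (- (s * t)) / t)" for s
    have "((\<lambda>s. t powr (- \<beta>) * exp (- (s * t))) has_integral (F n - F 1)) {1..n}"
    proof (rule fundamental_theorem_of_calculus[OF n])
      fix s assume "s \<in> {1..n}"
      show "(F has_vector_derivative t powr (- \<beta>) * exp (- (s * t))) (at s within {1..n})"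
        unfolding F_def has_real_derivative_iff_has_vector_derivative[symmetric] using True
        by (auto intro!: derivative_eq_intros simp: field_simps)
    qed
    moreover have "F n - F 1 = t powr (- \<beta> - 1) * (exp (- t) - exp (- (n * t)))"
      using True by (simp add: F_def powr_diff field_simps)
    ultimately have hi: "((\<lambda>s. t powr (- \<beta>) * exp (- (s * t))) has_integral t powr (- \<beta> - 1) * (exp (- t) - exp (- (n * t)))) {1..n}"
      by simp
    have "(\<integral>\<^sup>+s. H t s \<partial>lborel) = (\<integral>\<^sup>+s. ennreal (t powr (- \<beta>) * exp (- (s * t))) * indicator {1..n} s \<partial>lborel)"
      using True by (intro nn_integral_cong) (auto simp: H_def indicator_def)
    also have "\<dots> = ennreal (t powr (- \<beta> - 1) * (exp (- t) - exp (- (n * t))))"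
      by (rule nn_integral_has_integral_lebesgue'[OF _ hi]) auto
    finally show ?thesis using True by simp
  qed
  have inner_t: "(\<integral>\<^sup>+t. H t s \<partial>lborel) = ennreal (indicator {1..n} s * (s powr (\<beta> - 1) * Gamma (1 - \<beta>)))" for s
  proof (cases "s \<in> {1..n}")
    case False
    then show ?thesis by (simp add: H_def)
  next
    case True
    have "(\<integral>\<^sup>+t. H t s \<partial>lborel) = (\<integral>\<^sup>+t. ennreal (indicator {0..} t * t powr ((1 - \<beta>) - 1) * exp (- (s * t))) \<partial>lborel)"
      using True by (intro nn_integral_cong) (auto simp: H_def mult.commute)
    also have "\<dots> = ennreal (s powr (- (1 - \<beta>)) * Gamma (1 - \<beta>))"
      using True \<beta> by (intro gamma_scale) auto
    finally show ?thesis using True by simp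
  qed
  have Hm: "case_prod H \<in> borel_measurable (lborel \<Otimes>\<^sub>M lborel)"
    unfolding H_def case_prod_unfold by measurable
  have "(\<integral>\<^sup>+t. ennreal (indicator {0..} t * t powr (- \<beta> - 1) * (exp (- t) - exp (- (n * t)))) \<partial>lborel)
      = (\<integral>\<^sup>+t. (\<integral>\<^sup>+s. H t s \<partial>lborel) \<partial>lborel)" by (simp only: inner_s)
  also have "\<dots> = (\<integral>\<^sup>+s. (\<integral>\<^sup>+t. H t s \<partial>lborel) \<partial>lborel)"
    by (rule lborel_pair.Fubini'[OF Hm, symmetric])
  also have "\<dots> = (\<integral>\<^sup>+s. ennreal (indicator {1..n} s * (s powr (\<beta> - 1) * Gamma (1 - \<beta>))) \<partial>lborel)"
    by (simp only: inner_t)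
  also have "\<dots> = ennreal (G * Gamma (1 - \<beta>))"
    by (rule nn_integral_has_integral_lebesgue[OF _ has_integral_mult_left[OF G]])
       (use \<beta> in \<open>auto intro!: mult_nonneg_nonneg less_imp_le[OF Gamma_real_pos]\<close>)
  finally show ?thesis by (simp add: mult.commute)
qed



lemma pos_sum:
  fixes p :: "nat \<Rightarrow> real" and \<beta> :: real and Gf :: "nat \<Rightarrow> real"
  assumes p: "\<And>n. 0 \<le> p n" "p sums 1" "p 0 = 0" and \<beta>: "0 \<le> \<beta>" "\<beta> < 1"
    and Gf: "\<And>n. 1 \<le> n \<Longrightarrow> ((\<lambda>s. s powr (\<beta> - 1)) has_integral Gf n) {1..real n}"
  shows "(\<integral>\<^sup>+t. ennreal (indicator {0..} t * t powr (- \<beta> - 1) * (exp (- t) - PS p (exp (- t)))) \<partial>lborel)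
       = (\<Sum>n. ennreal (p n * (Gamma (1 - \<beta>) * Gf n)))"
proof -
  have ps: "summable p" using p(2) by (rule sums_summable)
  have eq: "(\<lambda>t. ennreal (indicator {0..} t * t powr (- \<beta> - 1) * (exp (- t) - PS p (exp (- t)))))
     = (\<lambda>t. \<Sum>n. ennreal (indicator {0..} t * t powr (- \<beta> - 1) * (p n * (exp (- t) - exp (- t) ^ n))))"
  proof
    fix t :: real
    show "ennreal (indicator {0..} t * t powr (- \<beta> - 1) * (exp (- t) - PS p (exp (- t)))) =
       (\<Sum>n. ennreal (indicator {0..} t * t powr (- \<beta> - 1) * (p n * (exp (- t) - exp (- t) ^ n))))"
    proof (cases "0 \<le> t")
      case True
      let ?c = "indicator {0..} t * t powr (- \<beta> - 1)"
      have s1: "(\<lambda>n. p n * exp (- t)) sums (1 * exp (- t))" by (rule sums_mult2[OF p(2)])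
      have s2: "(\<lambda>n. p n * exp (- t) ^ n) sums PS p (exp (- t))"
        unfolding PS_def using PS_exp_summable[OF p(1) ps True] by (simp add: summable_sums)
      have s3: "(\<lambda>n. ?c * (p n * (exp (- t) - exp (- t) ^ n))) sums (?c * (exp (- t) - PS p (exp (- t))))"
        using sums_mult[OF sums_diff[OF s1 s2], of ?c] by (simp add: algebra_simps)
      have nn: "0 \<le> ?c * (p n * (exp (- t) - exp (- t) ^ n))" for n
      proof (cases "n = 0")
        case True then show ?thesis using p(3) by simp
      next
        case False
        have "exp (- t) ^ n \<le> exp (- t) ^ 1" using True False
          by (intro power_decreasing) auto
        then show ?thesis using True p(1)[of n] by (intro mult_nonneg_nonneg) auto
      qed
      show ?thesis using suminf_ennreal_eq[OF nn s3] by simp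
    next
      case False
      then show ?thesis by simp
    qed
  qed
  have trm: "(\<integral>\<^sup>+t. ennreal (indicator {0..} t * t powr (- \<beta> - 1) * (p n * (exp (- t) - exp (- t) ^ n))) \<partial>lborel)
      = ennreal (p n * (Gamma (1 - \<beta>) * Gf n))" for n
  proof (cases "n = 0")
    case True
    then show ?thesis using p(3) by simp
  next
    case False
    have "(\<integral>\<^sup>+t. ennreal (indicator {0..} t * t powr (- \<beta> - 1) * (p n * (exp (- t) - exp (- t) ^ n))) \<partial>lborel)
        = (\<integral>\<^sup>+t. ennreal (p n) * ennreal (indicator {0..} t * t powr (- \<beta> - 1) * (exp (- t) - exp (- (real n * t)))) \<partial>lborel)"
      using p(1)[of n] by (intro nn_integral_cong) (auto simp: ennreal_mult'[symmetric] exp_of_nat_mult[symmetric] algebra_simps)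
    also have "\<dots> = ennreal (p n) * (\<integral>\<^sup>+t. ennreal (indicator {0..} t * t powr (- \<beta> - 1) * (exp (- t) - exp (- (real n * t)))) \<partial>lborel)"
      by (rule nn_integral_cmult) measurable
    also have "\<dots> = ennreal (p n) * ennreal (Gamma (1 - \<beta>) * Gf n)"
      using False \<beta> by (subst pos_kernel[OF \<beta> _ Gf]) auto
    also have "\<dots> = ennreal (p n * (Gamma (1 - \<beta>) * Gf n))"
      using p(1)[of n] by (simp add: ennreal_mult'[symmetric])
    finally show ?thesis .
  qed
  show ?thesis unfolding eq
    by (subst nn_integral_suminf) (measurable, simp only: trm)
qed

lemma pos_finite:
  fixes \<beta> :: real and D :: "real \<Rightarrow> real"
  assumes \<beta>: "0 \<le> \<beta>" "\<beta> < 1/2"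
    and D: "\<And>t. 0 < t \<Longrightarrow> 0 \<le> D t \<and> D t \<le> exp (- t) \<and> (D t)\<^sup>2 \<le> 4 * (1 - exp (- t)) / exp (- t)"
  shows "(\<integral>\<^sup>+t. ennreal (indicator {0..} t * t powr (- \<beta> - 1) * D t) \<partial>lborel) < \<infinity>"
proof -
  define b where "b = 1/2 - \<beta>"
  have b: "0 < b" using \<beta> by (simp add: b_def)
  have pw: "indicator {0..} t * t powr (- \<beta> - 1) * D t \<le> 12 * (indicator {0..} t * t powr (b - 1) * exp (- (1 * t)))" for t :: real
  proof (cases "t > 0")
    case False
    then have "t < 0 \<or> t = 0" by auto
    then show ?thesis by auto
  next
    case t: True
    from D[OF t] have D0: "0 \<le> D t" and De: "D t \<le> exp (- t)" and D2: "(D t)\<^sup>2 \<le> 4 * (1 - exp (- t)) / exp (- t)" by auto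
    have "t powr (- \<beta> - 1) * D t \<le> 12 * (t powr (b - 1) * exp (- t))"
    proof (cases "t \<ge> 1")
      case True
      have "t powr (- \<beta> - 1) \<le> t powr (b - 1)" unfolding b_def using True by (intro powr_mono) linarith+
      then have "t powr (- \<beta> - 1) * D t \<le> t powr (b - 1) * exp (- t)"
        using D0 De by (intro mult_mono) auto
      also have "\<dots> \<le> 12 * (t powr (b - 1) * exp (- t))" by simp
      finally show ?thesis .
    next
      case False
      have e1: "1 - exp (- t) \<le> t" using exp_ge_add_one_self[of "- t"] by simp
      have "exp t \<le> exp 1" using False by simp
      then have e2: "exp t \<le> 3" using exp_le by linarith
      have "(D t)\<^sup>2 \<le> 4 * (1 - exp (- t)) * exp t" using D2 by (simp add: exp_minus field_simps)
      also have "\<dots> \<le> 4 * t * 3" using e1 e2 t by (intro mult_mono) auto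
      finally have "(D t)\<^sup>2 \<le> 12 * t" by simp
      then have "D t \<le> sqrt (12 * t)" using D0 by (simp add: real_le_rsqrt)
      also have "\<dots> = sqrt 12 * t powr (1/2)" using t by (simp add: real_sqrt_mult powr_half_sqrt)
      finally have Db: "D t \<le> sqrt 12 * t powr (1/2)" .
      have "t powr (- \<beta> - 1) * D t \<le> t powr (- \<beta> - 1) * (sqrt 12 * t powr (1/2))"
        using Db by (intro mult_left_mono) auto
      also have "\<dots> = sqrt 12 * t powr (b - 1)"
        using t by (simp add: b_def powr_add[symmetric] algebra_simps)
      also have "\<dots> \<le> 4 * t powr (b - 1)"
      proof -
        have "sqrt 12 \<le> 4" by (rule real_le_lsqrt) auto
        then show ?thesis by (intro mult_right_mono) auto
      qed
      also have "\<dots> \<le> 4 * (t powr (b - 1) * (3 * exp (- t)))"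
      proof -
        have "exp (- 1) \<le> exp (- t)" using False by simp
        moreover have "1 / 3 \<le> exp (- 1::real)"
          using exp_le by (simp add: exp_minus field_simps)
        ultimately have "1 \<le> 3 * exp (- t)" by linarith
        then show ?thesis by (intro mult_left_mono) (auto simp: mult_le_cancel_left1)
      qed
      finally show ?thesis by (simp add: algebra_simps)
    qed
    then show ?thesis using t by simp
  qed
  have "(\<integral>\<^sup>+t. ennreal (indicator {0..} t * t powr (- \<beta> - 1) * D t) \<partial>lborel)
      \<le> (\<integral>\<^sup>+t. ennreal (12 * (indicator {0..} t * t powr (b - 1) * exp (- (1 * t)))) \<partial>lborel)"
    using pw by (intro nn_integral_mono ennreal_leI)
  also have "\<dots> = (\<integral>\<^sup>+t. ennreal 12 * ennreal (indicator {0..} t * t powr (b - 1) * exp (- (1 * t))) \<partial>lborel)"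
    by (intro nn_integral_cong ennreal_mult) auto
  also have "\<dots> = ennreal 12 * (\<integral>\<^sup>+t. ennreal (indicator {0..} t * t powr (b - 1) * exp (- (1 * t))) \<partial>lborel)"
    by (rule nn_integral_cmult) measurable
  also have "\<dots> = ennreal 12 * ennreal (1 powr (- b) * Gamma b)"
    using b by (subst gamma_scale) auto
  also have "\<dots> < \<infinity>" by (simp add: ennreal_mult_less_top)
  finally show ?thesis .
qed

lemma PS_le_z:
  fixes p :: "nat \<Rightarrow> real"
  assumes p: "\<And>n. 0 \<le> p n" "p sums 1" "p 0 = 0" and z: "0 \<le> z" "z \<le> 1"
  shows "PS p z \<le> z"
proof -
  have "PS p z \<le> (\<Sum>n. p n * z)"
    unfolding PS_def
  proof (rule suminf_le)
    fix n show "p n * z ^ n \<le> p n * z"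
    proof (cases "n = 0")
      case False
      then have "z ^ n \<le> z ^ 1" using z by (intro power_decreasing) auto
      then show ?thesis using p(1)[of n] by (intro mult_left_mono) auto
    qed (simp add: p(3))
  qed (use p z in \<open>auto intro!: PS_summable sums_summable[OF p(2)] summable_mult2\<close>)
  also have "\<dots> = z" using sums_mult2[OF p(2), of z] by (simp add: sums_iff)
  finally show ?thesis .
qed

lemma PS_nonneg:
  fixes p :: "nat \<Rightarrow> real"
  assumes p: "\<And>n. 0 \<le> p n" "summable p" and z: "0 \<le> z" "z \<le> 1"
  shows "0 \<le> PS p z"
  unfolding PS_def using p z by (intro suminf_nonneg) (auto intro!: PS_summable)

lemma cmp_pos_core:
  fixes p q :: "nat \<Rightarrow> real" and \<beta> :: real and Gf :: "nat \<Rightarrow> real"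
  assumes p: "\<And>n. 0 \<le> p n" "p sums 1" "p 0 = 0"
    and q: "\<And>n. 0 \<le> q n" "q sums 1" "q 0 = 0"
    and \<beta>: "0 \<le> \<beta>" "\<beta> < 1"
    and Gf: "\<And>n. 1 \<le> n \<Longrightarrow> ((\<lambda>s. s powr (\<beta> - 1)) has_integral Gf n) {1..real n}"
    and lt: "\<And>z. 0 < z \<Longrightarrow> z < 1 \<Longrightarrow> PS p z < PS q z"
    and finp: "(\<integral>\<^sup>+t. ennreal (indicator {0..} t * t powr (- \<beta> - 1) * (exp (- t) - PS p (exp (- t)))) \<partial>lborel) < \<infinity>"
  shows "summable (\<lambda>n. p n * Gf n)" "summable (\<lambda>n. q n * Gf n)" "(\<Sum>n. q n * Gf n) < (\<Sum>n. p n * Gf n)"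
proof -
  define c where "c = Gamma (1 - \<beta>)"
  have c: "0 < c" unfolding c_def using \<beta> by (intro Gamma_real_pos) auto
  have Gf0: "0 \<le> Gf n" if "1 \<le> n" for n
    using Gf[OF that] that by (intro has_integral_nonneg[OF Gf[OF that]]) auto
  have nnp: "0 \<le> p n * (c * Gf n)" for n
    by (cases "n = 0") (use p c Gf0 in \<open>auto intro!: mult_nonneg_nonneg\<close>)
  have nnq: "0 \<le> q n * (c * Gf n)" for n
    by (cases "n = 0") (use q c Gf0 in \<open>auto intro!: mult_nonneg_nonneg\<close>)
  let ?f = "\<lambda>t. ennreal (indicator {0..} t * t powr (- \<beta> - 1) * (exp (- t) - PS q (exp (- t))))"
  let ?g = "\<lambda>t. ennreal (indicator {0..} t * t powr (- \<beta> - 1) * (exp (- t) - PS p (exp (- t))))"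
  have fm: "?f \<in> borel_measurable lborel" and gm: "?g \<in> borel_measurable lborel"
    using PS_exp_meas[of p] PS_exp_meas[of q] by measurable
  have psum: "summable p" and qsum: "summable q" using p(2) q(2) by (auto intro: sums_summable)
  have fg: "?f t \<le> ?g t" for t
  proof (cases "t > 0")
    case True
    have "PS p (exp (- t)) < PS q (exp (- t))" using True by (intro lt) auto
    then show ?thesis using True by (intro ennreal_leI mult_left_mono) auto
  next
    case False
    then have "t < 0 \<or> t = 0" by auto
    then show ?thesis by auto
  qed
  have Ifg: "integral\<^sup>N lborel ?f < integral\<^sup>N lborel ?g"
  proof (rule nn_integral_less[OF fm gm])
    have "integral\<^sup>N lborel ?f \<le> integral\<^sup>N lborel ?g" using fg by (intro nn_integral_mono) auto
    then show "integral\<^sup>N lborel ?f \<noteq> \<infinity>" using finp by auto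
    show "AE t in lborel. ?f t \<le> ?g t" using fg by auto
    show "\<not> (AE t in lborel. ?g t \<le> ?f t)"
    proof (rule not_AE_lborel)
      fix t :: real assume t: "0 < t" "t < 1"
      have e: "0 < exp (- t)" "exp (- t) < 1" using t by auto
      have lt1: "PS p (exp (- t)) < PS q (exp (- t))" using e by (intro lt) auto
      have "PS q (exp (- t)) \<le> exp (- t)" using e by (intro PS_le_z[OF q]) auto
      then have "0 < t powr (- \<beta> - 1) * (exp (- t) - PS p (exp (- t)))" using lt1 t by simp
      moreover have "t powr (- \<beta> - 1) * (exp (- t) - PS q (exp (- t))) < t powr (- \<beta> - 1) * (exp (- t) - PS p (exp (- t)))"
        using lt1 t by (intro mult_strict_left_mono) auto
      ultimately have "ennreal (t powr (- \<beta> - 1) * (exp (- t) - PS q (exp (- t)))) < ennreal (t powr (- \<beta> - 1) * (exp (- t) - PS p (exp (- t))))"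
        by (intro ennreal_lessI) auto
      then show "\<not> ?g t \<le> ?f t" using t by (simp add: not_le)
    qed
  qed
  have Ip: "integral\<^sup>N lborel ?g = (\<Sum>n. ennreal (p n * (c * Gf n)))"
    unfolding c_def by (rule pos_sum[OF p \<beta> Gf])
  have Iq: "integral\<^sup>N lborel ?f = (\<Sum>n. ennreal (q n * (c * Gf n)))"
    unfolding c_def by (rule pos_sum[OF q \<beta> Gf])
  have sp: "summable (\<lambda>n. p n * (c * Gf n))"
    using finp Ip by (intro summable_suminf_not_top nnp) auto
  have sq: "summable (\<lambda>n. q n * (c * Gf n))"
    using finp Ip Iq Ifg by (intro summable_suminf_not_top nnq) auto
  have eqp: "(\<lambda>n. p n * Gf n) = (\<lambda>n. (1 / c) * (p n * (c * Gf n)))" using c by auto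
  have eqq: "(\<lambda>n. q n * Gf n) = (\<lambda>n. (1 / c) * (q n * (c * Gf n)))" using c by auto
  show sp': "summable (\<lambda>n. p n * Gf n)" unfolding eqp by (rule summable_mult[OF sp])
  show sq': "summable (\<lambda>n. q n * Gf n)" unfolding eqq by (rule summable_mult[OF sq])
  have "ennreal (\<Sum>n. q n * (c * Gf n)) < ennreal (\<Sum>n. p n * (c * Gf n))"
    using Ifg Ip Iq suminf_ennreal2[OF nnp sp] suminf_ennreal2[OF nnq sq] by simp
  then have "(\<Sum>n. q n * (c * Gf n)) < (\<Sum>n. p n * (c * Gf n))"
    by (metis ennreal_leI not_le)
  moreover have "(\<Sum>n. p n * (c * Gf n)) = c * (\<Sum>n. p n * Gf n)"
    using suminf_mult[OF sp', of c] by (simp add: algebra_simps)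
  moreover have "(\<Sum>n. q n * (c * Gf n)) = c * (\<Sum>n. q n * Gf n)"
    using suminf_mult[OF sq', of c] by (simp add: algebra_simps)
  ultimately show "(\<Sum>n. q n * Gf n) < (\<Sum>n. p n * Gf n)" using c by simp
qed



abbreviation Yf :: "nat pmf \<Rightarrow> real \<Rightarrow> real" where "Yf \<xi> \<equiv> PS (gw_size_prob \<xi>)"

lemma pmf0_xi1: "2 \<le> m \<Longrightarrow> pmf (xi1 m) 0 > 0"
  by (simp add: pmf_xi1)

lemma pmf0_xi5: "2 \<le> m \<Longrightarrow> pmf (xi5 m) 0 > 0"
  by (simp add: pmf_xi5)

lemma pmf0_xi2: "pmf xi2 0 > 0"
  by (simp add: xi2_def)

lemma pmf0_xi4: "pmf xi4 0 > 0"
  by (simp add: xi4_def)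

lemma Y_xi1_step: "2 \<le> m \<Longrightarrow> 0 < z \<Longrightarrow> z < 1 \<Longrightarrow> Yf (xi1 m) z < Yf (xi1 (Suc m)) z"
proof (rule Y_compare)
  fix y :: real assume m: "2 \<le> m" and y: "0 < y" "y < 1"
  have m1: "1 \<le> m" "1 \<le> Suc m" using m by auto
  show "pgf (xi1 m) y < pgf (xi1 (Suc m)) y"
    unfolding pgf_xi1[OF m1(1)] pgf_xi1[OF m1(2)] using y m1(1) by (rule ineq_a)
qed (auto simp: pmf0_xi1)

lemma Y_xi1_xi2: "2 \<le> m \<Longrightarrow> 0 < z \<Longrightarrow> z < 1 \<Longrightarrow> Yf (xi1 m) z < Yf xi2 z"
  by (rule Y_compare) (auto simp: pmf0_xi1 pgf_xi1 pgf_xi2 intro!: ineq_b)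

lemma Y_xi2_xi3: "0 < z \<Longrightarrow> z < 1 \<Longrightarrow> Yf xi2 z < Yf xi3 z"
  by (rule Y_compare) (auto simp: pmf0_xi2 pgf_xi2 xi3_eq pgf_xi5 intro!: ineq_c[simplified])

lemma Y_xi3_xi4: "0 < z \<Longrightarrow> z < 1 \<Longrightarrow> Yf xi3 z < Yf xi4 z"
  unfolding xi3_eq
  by (rule Y_compare) (auto simp: pmf0_xi5 pgf_xi5 pgf_xi4 intro!: ineq_d[simplified])

lemma Y_xi4_xi53: "0 < z \<Longrightarrow> z < 1 \<Longrightarrow> Yf xi4 z < Yf (xi5 3) z"
  by (rule Y_compare) (auto simp: pmf0_xi4 pgf_xi5 pgf_xi4 intro!: ineq_e[simplified])

lemma Y_xi5_step: "2 \<le> m \<Longrightarrow> 0 < z \<Longrightarrow> z < 1 \<Longrightarrow> Yf (xi5 m) z < Yf (xi5 (Suc m)) z"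
proof (rule Y_compare)
  fix y :: real assume m: "2 \<le> m" and y: "0 < y" "y < 1"
  have m1: "1 \<le> m" "1 \<le> Suc m" using m by auto
  show "pgf (xi5 m) y < pgf (xi5 (Suc m)) y"
    unfolding pgf_xi5[OF m1(1)] pgf_xi5[OF m1(2)] using y m1(1) by (rule ineq_f)
qed (auto simp: pmf0_xi5)

lemma strict_chain:
  fixes f :: "nat \<Rightarrow> real"
  assumes step: "\<And>m. a \<le> m \<Longrightarrow> f m < f (Suc m)" and am: "a \<le> m"
  shows "m < m' \<Longrightarrow> f m < f m'"
proof (induction m')
  case 0 then show ?case by simp
next
  case (Suc k)
  show ?case
  proof (cases "m = k")
    case True then show ?thesis using step am by simp
  next
    case False
    then have "m < k" using Suc by simp
    then have "f m < f k" using Suc by simp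
    also have "f k < f (Suc k)" using step am \<open>m < k\<close> by simp
    finally show ?thesis .
  qed
qed

lemma Y_xi1_mono: "2 \<le> m \<Longrightarrow> m < m' \<Longrightarrow> 0 < z \<Longrightarrow> z < 1 \<Longrightarrow> Yf (xi1 m) z < Yf (xi1 m') z"
  using strict_chain[of 2 "\<lambda>m. Yf (xi1 m) z" m m'] Y_xi1_step by auto

lemma Y_xi5_mono: "2 \<le> m \<Longrightarrow> m < m' \<Longrightarrow> 0 < z \<Longrightarrow> z < 1 \<Longrightarrow> Yf (xi5 m) z < Yf (xi5 m') z"
  using strict_chain[of 2 "\<lambda>m. Yf (xi5 m) z" m m'] Y_xi5_step by auto



lemma Y_bounds: "0 \<le> z \<Longrightarrow> z \<le> 1 \<Longrightarrow> 0 \<le> Yf \<xi> z \<and> Yf \<xi> z \<le> (\<Sum>n. gw_size_prob \<xi> n)"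
proof -
  assume z: "0 \<le> z" "z \<le> 1"
  have "0 \<le> Yf \<xi> z" using z by (intro PS_nonneg gw_size_prob_nonneg size_summable)
  moreover have "Yf \<xi> z \<le> (\<Sum>n. gw_size_prob \<xi> n)" unfolding PS_def
    using z by (intro suminf_le size_PS_summable size_summable)
       (auto intro!: mult_left_le power_le_one gw_size_prob_nonneg)
  ultimately show ?thesis by simp
qed

lemma Y_le_1: "0 \<le> z \<Longrightarrow> z \<le> 1 \<Longrightarrow> Yf \<xi> z \<le> 1"
  using Y_bounds[of z \<xi>] size_suminf_le_1[of \<xi>] by linarith

lemma Y12_bound:
  assumes z: "0 < z" "z < 1"
  shows "(1 - Yf (xi1 2) z)\<^sup>2 \<le> 4 * (1 - z) / z"
proof -
  define Y where "Y = Yf (xi1 2) z"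
  have Y0: "0 \<le> Y" and Y1: "Y \<le> 1" unfolding Y_def using Y_bounds[of z "xi1 2"] Y_le_1[of z "xi1 2"] z by auto
  have "Y = z * pgf (xi1 2) Y" unfolding Y_def using z by (intro Y_fixed) auto
  also have "pgf (xi1 2) Y = (Y / 2 + 1 / 2) ^ 2" by (subst pgf_xi1) auto
  finally have fx: "4 * Y = z * (1 + Y)\<^sup>2" by (simp add: power2_eq_square field_simps)
  have "z * (1 - Y)\<^sup>2 = z * (1 + Y)\<^sup>2 - 4 * z * Y" by (simp add: power2_eq_square algebra_simps)
  also have "\<dots> = 4 * Y * (1 - z)" using fx by (simp add: algebra_simps)
  also have "\<dots> \<le> 4 * (1 - z)"
  proof -
    have "Y * (1 - z) \<le> 1 * (1 - z)" using Y1 z by (intro mult_right_mono) auto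
    then show ?thesis by linarith
  qed
  finally have "z * (1 - Y)\<^sup>2 \<le> 4 * (1 - z)" .
  then show ?thesis unfolding Y_def[symmetric] using z by (simp add: le_divide_eq mult.commute)
qed

definition good :: "nat pmf \<Rightarrow> bool" where
  "good \<xi> \<longleftrightarrow> (\<forall>z. 0 < z \<and> z < 1 \<longrightarrow> Yf (xi1 2) z \<le> Yf \<xi> z)"

lemma good_sums1:
  assumes g: "good \<xi>"
  shows "gw_size_prob \<xi> sums 1"
proof -
  define S where "S = (\<Sum>n. gw_size_prob \<xi> n)"
  have S1: "S \<le> 1" unfolding S_def by (rule size_suminf_le_1)
  have "S \<ge> 1"
  proof (rule ccontr)
    assume "\<not> S \<ge> 1"
    then have S1': "S < 1" by simp
    define d where "d = (1 - S)\<^sup>2 / 8"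
    have d: "0 < d" unfolding d_def using S1' by simp
    define z where "z = 1 / (1 + d)"
    have z: "0 < z" "z < 1" unfolding z_def using d by auto
    have zd: "(1 - z) / z = d" unfolding z_def using d by (simp add: field_simps)
    have "Yf \<xi> z \<le> S" unfolding S_def using Y_bounds[of z \<xi>] z by simp
    moreover have "Yf (xi1 2) z \<le> Yf \<xi> z" using g z by (simp add: good_def)
    ultimately have "1 - S \<le> 1 - Yf (xi1 2) z" by simp
    then have "(1 - S)\<^sup>2 \<le> (1 - Yf (xi1 2) z)\<^sup>2" using S1' by (intro power_mono) auto
    also have "\<dots> \<le> 4 * (1 - z) / z" by (rule Y12_bound[OF z])
    also have "\<dots> = 4 * ((1 - z) / z)" by simp
    also have "\<dots> = 4 * d" using zd by simp
    also have "\<dots> < (1 - S)\<^sup>2" unfolding d_def using S1' by simp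
    finally show False by simp
  qed
  then have "S = 1" using S1 by simp
  then show ?thesis unfolding S_def using size_summable[of \<xi>] by (simp add: summable_sums_iff)
qed

lemma good_fin:
  assumes g: "good \<xi>" and \<beta>: "0 \<le> \<beta>" "\<beta> < 1/2"
  shows "(\<integral>\<^sup>+t. ennreal (indicator {0..} t * t powr (- \<beta> - 1) * (exp (- t) - Yf \<xi> (exp (- t)))) \<partial>lborel) < \<infinity>"
proof (rule pos_finite[OF \<beta>])
  fix t :: real assume t: "0 < t"
  have e: "0 < exp (- t)" "exp (- t) < 1" using t by auto
  have s1: "gw_size_prob \<xi> sums 1" by (rule good_sums1[OF g])
  have a: "Yf \<xi> (exp (- t)) \<le> exp (- t)"
    using e by (intro PS_le_z[OF gw_size_prob_nonneg s1 gw_size_prob_0]) auto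
  have b: "0 \<le> Yf \<xi> (exp (- t))" using Y_bounds[of "exp (- t)" \<xi>] e by simp
  have c: "Yf (xi1 2) (exp (- t)) \<le> Yf \<xi> (exp (- t))" using g e by (simp add: good_def)
  have "(exp (- t) - Yf \<xi> (exp (- t)))\<^sup>2 \<le> (1 - Yf (xi1 2) (exp (- t)))\<^sup>2"
    using a c e by (intro power_mono) (auto simp del: exp_less_one_iff)
  also have "\<dots> \<le> 4 * (1 - exp (- t)) / exp (- t)" using Y12_bound[OF e] .
  finally show "0 \<le> exp (- t) - Yf \<xi> (exp (- t)) \<and> exp (- t) - Yf \<xi> (exp (- t)) \<le> exp (- t) \<and>
      (exp (- t) - Yf \<xi> (exp (- t)))\<^sup>2 \<le> 4 * (1 - exp (- t)) / exp (- t)" using a b by simp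
qed

lemma Gpow:
  assumes a: "0 < \<alpha>" and n: "1 \<le> n"
  shows "((\<lambda>s. s powr (\<alpha> - 1)) has_integral ((real n powr \<alpha> - 1) / \<alpha>)) {1..real n}"
proof -
  have "((\<lambda>s. s powr (\<alpha> - 1)) has_integral ((\<lambda>s. s powr \<alpha> / \<alpha>) (real n) - (\<lambda>s. s powr \<alpha> / \<alpha>) 1)) {1..real n}"
  proof (rule fundamental_theorem_of_calculus)
    show "1 \<le> real n" using n by simp
    fix s assume s: "s \<in> {1..real n}"
    have s0: "0 < s" using s by simp
    have "((\<lambda>s. s powr \<alpha> / \<alpha>) has_real_derivative (\<alpha> * s powr (\<alpha> - 1)) / \<alpha>) (at s)"
      by (rule DERIV_cdivide[OF has_real_derivative_powr[OF s0]])
    moreover have "(\<alpha> * s powr (\<alpha> - 1)) / \<alpha> = s powr (\<alpha> - 1)" using a by simp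
    ultimately have "((\<lambda>s. s powr \<alpha> / \<alpha>) has_real_derivative s powr (\<alpha> - 1)) (at s)" by simp
    then have "((\<lambda>s. s powr \<alpha> / \<alpha>) has_vector_derivative s powr (\<alpha> - 1)) (at s)"
      by (simp only: has_real_derivative_iff_has_vector_derivative)
    then show "((\<lambda>s. s powr \<alpha> / \<alpha>) has_vector_derivative s powr (\<alpha> - 1)) (at s within {1..real n})"
      by (rule has_vector_derivative_at_within)
  qed
  then show ?thesis by (simp add: diff_divide_distrib)
qed

lemma Glog:
  assumes n: "1 \<le> n"
  shows "((\<lambda>s. s powr (0 - 1)) has_integral ln (real n)) {1..real n}"
proof -
  have "((\<lambda>s. s powr (0 - 1)) has_integral (ln (real n) - ln 1)) {1..real n}"
  proof (rule fundamental_theorem_of_calculus)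
    show "1 \<le> real n" using n by simp
    fix s assume s: "s \<in> {1..real n}"
    have s0: "0 < s" using s by simp
    have "(ln has_real_derivative inverse s) (at s)" by (rule DERIV_ln[OF s0])
    moreover have "inverse s = s powr (0 - 1)" using s0 by (simp add: powr_minus)
    ultimately have "(ln has_real_derivative s powr (0 - 1)) (at s)" by simp
    then have "(ln has_vector_derivative s powr (0 - 1)) (at s)"
      by (simp only: has_real_derivative_iff_has_vector_derivative)
    then show "(ln has_vector_derivative s powr (0 - 1)) (at s within {1..real n})"
      by (rule has_vector_derivative_at_within)
  qed
  then show ?thesis by simp
qed

lemma compare_all:
  assumes gA: "good \<xi>A" and gB: "good \<xi>B"
    and lt: "\<And>z. 0 < z \<Longrightarrow> z < 1 \<Longrightarrow> Yf \<xi>A z < Yf \<xi>B z"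
  shows "\<And>\<alpha>. \<alpha> < 0 \<Longrightarrow> gw_mu \<xi>A \<alpha> < gw_mu \<xi>B \<alpha>"
    and "\<And>\<alpha>. 0 < \<alpha> \<Longrightarrow> \<alpha> < 1/2 \<Longrightarrow> gw_mu \<xi>B \<alpha> < gw_mu \<xi>A \<alpha>"
    and "gw_mu_log \<xi>B < gw_mu_log \<xi>A"
proof -
  let ?p = "gw_size_prob \<xi>A" and ?q = "gw_size_prob \<xi>B"
  have pA: "\<And>n. 0 \<le> ?p n" "?p sums 1" "?p 0 = 0"
    using good_sums1[OF gA] gw_size_prob_nonneg gw_size_prob_0 by auto
  have pB: "\<And>n. 0 \<le> ?q n" "?q sums 1" "?q 0 = 0"
    using good_sums1[OF gB] gw_size_prob_nonneg gw_size_prob_0 by auto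
  show "gw_mu \<xi>A \<alpha> < gw_mu \<xi>B \<alpha>" if "\<alpha> < 0" for \<alpha>
    unfolding gw_mu_def
    by (rule cmp_neg[OF gw_size_prob_nonneg size_summable gw_size_prob_0
                         gw_size_prob_nonneg size_summable gw_size_prob_0 lt that]) auto
  show "gw_mu \<xi>B \<alpha> < gw_mu \<xi>A \<alpha>" if a: "0 < \<alpha>" "\<alpha> < 1/2" for \<alpha>
  proof -
    define Gf where "Gf n = (real n powr \<alpha> - 1) / \<alpha>" for n :: nat
    have Gf: "((\<lambda>s. s powr (\<alpha> - 1)) has_integral Gf n) {1..real n}" if "1 \<le> n" for n
      unfolding Gf_def using a that by (intro Gpow) auto
    have finp: "(\<integral>\<^sup>+t. ennreal (indicator {0..} t * t powr (- \<alpha> - 1) * (exp (- t) - PS ?p (exp (- t)))) \<partial>lborel) < \<infinity>"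
      using good_fin[OF gA, of \<alpha>] a by simp
    note core = cmp_pos_core[OF pA pB _ _ Gf lt finp]
    have c1: "summable (\<lambda>n. ?p n * Gf n)" "summable (\<lambda>n. ?q n * Gf n)" "(\<Sum>n. ?q n * Gf n) < (\<Sum>n. ?p n * Gf n)"
      using core a by auto
    have rep: "gw_mu \<xi> \<alpha> = 1 + \<alpha> * (\<Sum>n. gw_size_prob \<xi> n * Gf n)"
      if s1: "gw_size_prob \<xi> sums 1" and sG: "summable (\<lambda>n. gw_size_prob \<xi> n * Gf n)" for \<xi>
    proof -
      have eq: "gw_size_prob \<xi> n * real n powr \<alpha> = gw_size_prob \<xi> n + \<alpha> * (gw_size_prob \<xi> n * Gf n)" for n
        by (cases "n = 0") (use a in \<open>auto simp: gw_size_prob_0 Gf_def field_simps\<close>)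
      have "gw_mu \<xi> \<alpha> = (\<Sum>n. gw_size_prob \<xi> n + \<alpha> * (gw_size_prob \<xi> n * Gf n))"
        unfolding gw_mu_def eq ..
      also have "\<dots> = (\<Sum>n. gw_size_prob \<xi> n) + (\<Sum>n. \<alpha> * (gw_size_prob \<xi> n * Gf n))"
        by (rule suminf_add[symmetric]) (use s1 sG in \<open>auto intro: sums_summable summable_mult\<close>)
      also have "\<dots> = 1 + \<alpha> * (\<Sum>n. gw_size_prob \<xi> n * Gf n)"
        using s1 suminf_mult[OF sG, of \<alpha>] by (simp add: sums_iff)
      finally show ?thesis .
    qed
    show ?thesis using rep[OF pA(2) c1(1)] rep[OF pB(2) c1(2)] c1(3) a by simp
  qed
  show "gw_mu_log \<xi>B < gw_mu_log \<xi>A"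
  proof -
    have Gf: "((\<lambda>s. s powr (0 - 1)) has_integral (\<lambda>n. ln (real n)) n) {1..real n}" if "1 \<le> n" for n :: nat
      using that by (simp only: Glog)
    have finp: "(\<integral>\<^sup>+t. ennreal (indicator {0..} t * t powr (- 0 - 1) * (exp (- t) - PS ?p (exp (- t)))) \<partial>lborel) < \<infinity>"
      using good_fin[OF gA, of 0] by simp
    have "(\<Sum>n. ?q n * ln (real n)) < (\<Sum>n. ?p n * ln (real n))"
      using cmp_pos_core(3)[OF pA pB _ _ Gf lt finp] by simp
    then show ?thesis unfolding gw_mu_log_def .
  qed
qed



lemma good_xi1: "2 \<le> m \<Longrightarrow> good (xi1 m)"
  unfolding good_def
proof (intro allI impI)
  fix z :: real assume m: "2 \<le> m" and z: "0 < z \<and> z < 1"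
  show "Yf (xi1 2) z \<le> Yf (xi1 m) z"
  proof (cases "m = 2")
    case False
    then show ?thesis using Y_xi1_mono[of 2 m z] m z by simp
  qed simp
qed

lemma good_xi2: "good xi2"
  unfolding good_def using Y_xi1_xi2[of 2] by (auto intro: less_imp_le)

lemma good_xi3: "good xi3"
  unfolding good_def
proof (intro allI impI)
  fix z :: real assume z: "0 < z \<and> z < 1"
  then show "Yf (xi1 2) z \<le> Yf xi3 z" using Y_xi1_xi2[of 2 z] Y_xi2_xi3[of z] by linarith
qed

lemma good_xi4: "good xi4"
  unfolding good_def
proof (intro allI impI)
  fix z :: real assume z: "0 < z \<and> z < 1"
  then show "Yf (xi1 2) z \<le> Yf xi4 z" using Y_xi1_xi2[of 2 z] Y_xi2_xi3[of z] Y_xi3_xi4[of z] by linarith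
qed

lemma good_xi5: "3 \<le> m \<Longrightarrow> good (xi5 m)"
  unfolding good_def
proof (intro allI impI)
  fix z :: real assume m: "3 \<le> m" and z: "0 < z \<and> z < 1"
  have "Yf (xi1 2) z < Yf (xi5 3) z" using Y_xi1_xi2[of 2 z] Y_xi2_xi3[of z] Y_xi3_xi4[of z] Y_xi4_xi53[of z] z by simp
  moreover have "Yf (xi5 3) z \<le> Yf (xi5 m) z"
  proof (cases "m = 3")
    case False
    then show ?thesis using Y_xi5_mono[of 3 m z] m z by simp
  qed simp
  ultimately show "Yf (xi1 2) z \<le> Yf (xi5 m) z" by simp
qed

theorem theorem6p12:
  shows
  "(\<forall>\<alpha>::real. \<alpha> < 0 \<longrightarrow>
      (\<forall>m m'. 2 \<le> m \<and> m < m' \<longrightarrow> gw_mu (xi1 m) \<alpha> < gw_mu (xi1 m') \<alpha>) \<and>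
      (\<forall>m m'. 3 \<le> m \<and> m < m' \<longrightarrow> gw_mu (xi5 m) \<alpha> < gw_mu (xi5 m') \<alpha>) \<and>
      (\<forall>m. 2 \<le> m \<longrightarrow> gw_mu (xi1 m) \<alpha> < gw_mu xi2 \<alpha>) \<and>
      gw_mu xi2 \<alpha> < gw_mu xi3 \<alpha> \<and>
      gw_mu xi3 \<alpha> < gw_mu xi4 \<alpha> \<and>
      gw_mu xi4 \<alpha> < gw_mu (xi5 3) \<alpha>)
   \<and>
   (\<forall>\<alpha>::real. 0 < \<alpha> \<and> \<alpha> < 1/2 \<longrightarrow>
      (\<forall>m m'. 2 \<le> m \<and> m < m' \<longrightarrow> gw_mu (xi1 m) \<alpha> > gw_mu (xi1 m') \<alpha>) \<and>
      (\<forall>m m'. 3 \<le> m \<and> m < m' \<longrightarrow> gw_mu (xi5 m) \<alpha> > gw_mu (xi5 m') \<alpha>) \<and>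
      (\<forall>m. 2 \<le> m \<longrightarrow> gw_mu (xi1 m) \<alpha> > gw_mu xi2 \<alpha>) \<and>
      gw_mu xi2 \<alpha> > gw_mu xi3 \<alpha> \<and>
      gw_mu xi3 \<alpha> > gw_mu xi4 \<alpha> \<and>
      gw_mu xi4 \<alpha> > gw_mu (xi5 3) \<alpha>)
   \<and>
   ((\<forall>m m'. 2 \<le> m \<and> m < m' \<longrightarrow> gw_mu_log (xi1 m) > gw_mu_log (xi1 m')) \<and>
    (\<forall>m m'. 3 \<le> m \<and> m < m' \<longrightarrow> gw_mu_log (xi5 m) > gw_mu_log (xi5 m')) \<and>
    (\<forall>m. 2 \<le> m \<longrightarrow> gw_mu_log (xi1 m) > gw_mu_log xi2) \<and>
    gw_mu_log xi2 > gw_mu_log xi3 \<and>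
    gw_mu_log xi3 > gw_mu_log xi4 \<and>
    gw_mu_log xi4 > gw_mu_log (xi5 3))"
proof -
  have c11: "\<And>m m'. 2 \<le> m \<Longrightarrow> m < m' \<Longrightarrow> (\<forall>\<alpha><0. gw_mu (xi1 m) \<alpha> < gw_mu (xi1 m') \<alpha>) \<and>
      (\<forall>\<alpha>. 0 < \<alpha> \<and> \<alpha> < 1/2 \<longrightarrow> gw_mu (xi1 m') \<alpha> < gw_mu (xi1 m) \<alpha>) \<and> gw_mu_log (xi1 m') < gw_mu_log (xi1 m)"
    using compare_all[OF good_xi1 good_xi1 Y_xi1_mono] by auto
  have c55: "\<And>m m'. 3 \<le> m \<Longrightarrow> m < m' \<Longrightarrow> (\<forall>\<alpha><0. gw_mu (xi5 m) \<alpha> < gw_mu (xi5 m') \<alpha>) \<and>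
      (\<forall>\<alpha>. 0 < \<alpha> \<and> \<alpha> < 1/2 \<longrightarrow> gw_mu (xi5 m') \<alpha> < gw_mu (xi5 m) \<alpha>) \<and> gw_mu_log (xi5 m') < gw_mu_log (xi5 m)"
  proof -
    fix m m' :: nat assume m: "3 \<le> m" "m < m'"
    have Y: "\<And>z. 0 < z \<Longrightarrow> z < 1 \<Longrightarrow> Yf (xi5 m) z < Yf (xi5 m') z" using Y_xi5_mono m by simp
    show "?thesis m m'" using compare_all[OF good_xi5 good_xi5 Y] m by auto
  qed
  have c12: "\<And>m. 2 \<le> m \<Longrightarrow> (\<forall>\<alpha><0. gw_mu (xi1 m) \<alpha> < gw_mu xi2 \<alpha>) \<and>
      (\<forall>\<alpha>. 0 < \<alpha> \<and> \<alpha> < 1/2 \<longrightarrow> gw_mu xi2 \<alpha> < gw_mu (xi1 m) \<alpha>) \<and> gw_mu_log xi2 < gw_mu_log (xi1 m)"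
    using compare_all[OF good_xi1 good_xi2 Y_xi1_xi2] by auto
  have c23: "(\<forall>\<alpha><0. gw_mu xi2 \<alpha> < gw_mu xi3 \<alpha>) \<and>
      (\<forall>\<alpha>. 0 < \<alpha> \<and> \<alpha> < 1/2 \<longrightarrow> gw_mu xi3 \<alpha> < gw_mu xi2 \<alpha>) \<and> gw_mu_log xi3 < gw_mu_log xi2"
    using compare_all[OF good_xi2 good_xi3 Y_xi2_xi3] by auto
  have c34: "(\<forall>\<alpha><0. gw_mu xi3 \<alpha> < gw_mu xi4 \<alpha>) \<and>
      (\<forall>\<alpha>. 0 < \<alpha> \<and> \<alpha> < 1/2 \<longrightarrow> gw_mu xi4 \<alpha> < gw_mu xi3 \<alpha>) \<and> gw_mu_log xi4 < gw_mu_log xi3"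
    using compare_all[OF good_xi3 good_xi4 Y_xi3_xi4] by auto
  have c45: "(\<forall>\<alpha><0. gw_mu xi4 \<alpha> < gw_mu (xi5 3) \<alpha>) \<and>
      (\<forall>\<alpha>. 0 < \<alpha> \<and> \<alpha> < 1/2 \<longrightarrow> gw_mu (xi5 3) \<alpha> < gw_mu xi4 \<alpha>) \<and> gw_mu_log (xi5 3) < gw_mu_log xi4"
    using compare_all[OF good_xi4 good_xi5 Y_xi4_xi53] by auto
  show ?thesis using c11 c55 c12 c23 c34 c45 by auto
qed


end
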